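(* Let $d\ge2$, $r>1$, and let $W=(W(x))_{x\in\mathbf{R}^d}$ be a centered Gaussian field (i.e. all finite-dimensional distributions are Gaussian and $E[W(x)]=0$) which is almost surely continuous with $W(0)=0$ almost surely, and let $K(x,y)=E[W(x)W(y)]$. Let $D_1=E_1\setminus E_0$ where either $E_n=\{x:|x|<r^n\}$ or $E_n=\{x:|x_i|<r^n,\ i=1,\dots,d\}$. If there exists $\varepsilon>0$ such that \[\inf_{x\in D_1}\int_{D_1}K(x,y)\,dy\ge\varepsilon,\] then for every $a\in\mathbf{R}$, \[P\Big(\inf_{x\in D_1}W(x)\ge a\Big)>0.\] *)

theory Defs
  imports "HOL-Probability.Probability"
begin

definition centered_gaussian_rv :: "'a measure \<Rightarrow> ('a \<Rightarrow> real) \<Rightarrow> bool" where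
  "centered_gaussian_rv M X \<longleftrightarrow> X \<in> borel_measurable M \<and>
     (\<exists>\<sigma>\<ge>0. distr M lborel X =
        (if \<sigma> = 0 then return lborel 0 else density lborel (normal_density 0 \<sigma>)))"

text \<open>Centered Gaussian field: all finite-dimensional distributions are centered
  Gaussian, i.e. every finite linear combination of field values is a centered
  (possibly degenerate) Gaussian random variable.\<close>
definition centered_gaussian_field :: "'a measure \<Rightarrow> ('a \<Rightarrow> 'b \<Rightarrow> real) \<Rightarrow> bool" where
  "centered_gaussian_field M W \<longleftrightarrow>
     (\<forall>F c. finite F \<longrightarrow> centered_gaussian_rv M (\<lambda>\<omega>. \<Sum>x\<in>F. c x * W \<omega> x))"

definition Eball :: "real \<Rightarrow> nat \<Rightarrow> (real^'d) set" where
  "Eball r n = {x. norm x < r ^ n}"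

definition Ecube :: "real \<Rightarrow> nat \<Rightarrow> (real^'d) set" where
  "Ecube r n = {x. \<forall>i. \<bar>x $ i\<bar> < r ^ n}"

end

theory Submission
  imports Defs
begin


definition cf :: "'a measure \<Rightarrow> ('a \<Rightarrow> real) \<Rightarrow> real \<Rightarrow> complex" where
  "cf M X u = (CLINT \<omega>|M. iexp (u * X \<omega>))"

lemma gauss_rv_facts:
  assumes P: "prob_space M" and G: "centered_gaussian_rv M X"
  shows "integrable M (\<lambda>\<omega>. (X \<omega>)^2) \<and>
     (\<forall>u. cf M X u = complex_of_real (exp (-(u^2 * (\<integral>\<omega>. (X \<omega>)^2 \<partial>M))/2)))"
proof -
  interpret prob_space M by fact
  from G have Xm[measurable]: "X \<in> borel_measurable M" unfolding centered_gaussian_rv_def by auto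
  from G obtain \<sigma> where s0: "\<sigma> \<ge> 0" and D: "distr M lborel X =
        (if \<sigma> = 0 then return lborel 0 else density lborel (normal_density 0 \<sigma>))"
    unfolding centered_gaussian_rv_def by auto
  have Xm': "X \<in> measurable M lborel" using Xm by simp
  have int_eq: "integrable M (\<lambda>\<omega>. g (X \<omega>)) \<longleftrightarrow> integrable (distr M lborel X) g"
    if [measurable]: "g \<in> borel_measurable borel" for g :: "real \<Rightarrow> 'b::{banach,second_countable_topology}"
    by (subst integrable_distr_eq[OF Xm']) auto
  have i_eq: "(\<integral>\<omega>. g (X \<omega>) \<partial>M) = (\<integral>x. g x \<partial>distr M lborel X)"
    if [measurable]: "g \<in> borel_measurable borel" for g :: "real \<Rightarrow> 'b::{banach,second_countable_topology}"
    by (subst integral_distr[OF Xm']) auto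
  show ?thesis
  proof (cases "\<sigma> = 0")
    case True
    then have D0: "distr M lborel X = return lborel 0" using D by simp
    have ir: "integrable (return lborel (0::real)) (\<lambda>x. x^2)"
    proof -
      have "AE x in return lborel 0. x^2 = (0::real)" by (simp add: AE_return)
      then show ?thesis by (subst integrable_cong_AE[where g="\<lambda>_. 0"]) auto
    qed
    have "integrable M (\<lambda>\<omega>. (X \<omega>)^2)" using int_eq[of "\<lambda>x. x^2"] D0 ir by simp
    moreover have "(\<integral>\<omega>. (X \<omega>)^2 \<partial>M) = 0" using i_eq[of "\<lambda>x. x^2"] D0 by (simp add: integral_return)
    moreover have "cf M X u = 1" for u unfolding cf_def using i_eq[of "\<lambda>x. iexp (u * x)"] D0 by (simp add: integral_return)
    ultimately show ?thesis by simp
  next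
    case False
    then have sp: "\<sigma> > 0" using s0 by simp
    then have D1: "distr M lborel X = density lborel (normal_density 0 \<sigma>)" using D by simp
    have "integrable lborel (\<lambda>x. normal_density 0 \<sigma> x * (x - 0)^2)"
      by (rule integrable_normal_moment) (rule sp)
    then have "integrable M (\<lambda>\<omega>. (X \<omega>)^2)" using int_eq[of "\<lambda>x. x^2"] D1
      by (simp add: integrable_density)
    moreover have "(\<integral>\<omega>. (X \<omega>)^2 \<partial>M) = \<sigma>^2"
    proof -
      have "(\<integral>\<omega>. (X \<omega>)^2 \<partial>M) = (\<integral>x. normal_density 0 \<sigma> x * (x - 0)^(2*1) \<partial>lborel)"
        using i_eq[of "\<lambda>x. x^2"] D1 by (simp add: integral_density)
      also have "\<dots> = \<sigma>^2" using sp by (subst integral_normal_moment_even) (auto simp add: power2_eq_square)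
      finally show ?thesis .
    qed
    moreover have "cf M X u = complex_of_real (exp (-(u^2 * \<sigma>^2)/2))" for u
    proof -
      have "cf M X u = (\<integral>x. normal_density 0 \<sigma> x *\<^sub>R iexp (u * x) \<partial>lborel)"
        unfolding cf_def using i_eq[of "\<lambda>x. iexp (u * x)"] D1 by (simp add: integral_density)
      also have "\<dots> = \<bar>\<sigma>\<bar> *\<^sub>R (\<integral>y. normal_density 0 \<sigma> (0 + \<sigma> * y) *\<^sub>R iexp (u * (0 + \<sigma> * y)) \<partial>lborel)"
        using sp by (subst lborel_integral_real_affine[where c=\<sigma> and t=0]) auto
      also have "\<dots> = (\<integral>y. std_normal_density y *\<^sub>R iexp ((u * \<sigma>) * y) \<partial>lborel)"
      proof -
        have nd: "\<And>y. normal_density 0 \<sigma> (\<sigma> * y) = std_normal_density y / \<sigma>"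
          using sp unfolding normal_density_def
          by (simp add: power_mult_distrib real_sqrt_mult field_simps)
        have e: "\<And>y. normal_density 0 \<sigma> (0 + \<sigma> * y) *\<^sub>R iexp (u * (0 + \<sigma> * y))
            = (1/\<sigma>) *\<^sub>R (std_normal_density y *\<^sub>R iexp ((u * \<sigma>) * y))"
          using nd by (simp add: mult.assoc)
        show ?thesis using sp unfolding e integral_scaleR_right by simp
      qed
      also have "\<dots> = char std_normal_distribution (u * \<sigma>)"
        unfolding char_def by (subst integral_density) auto
      also have "\<dots> = complex_of_real (exp (-(u^2 * \<sigma>^2)/2))"
        by (simp add: char_std_normal_distribution power_mult_distrib)
      finally show ?thesis .
    qed
    ultimately show ?thesis by simp
  qed
qed


context prob_space begin

lemma distr_density_real_distribution:
  fixes p :: "'a \<Rightarrow> real"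
  assumes [measurable]: "p \<in> borel_measurable M" "X \<in> borel_measurable M"
    and nn: "\<And>\<omega>. 0 \<le> p \<omega>" and bd: "\<And>\<omega>. p \<omega> \<le> B" and one: "(\<integral>\<omega>. p \<omega> \<partial>M) = 1"
  shows "real_distribution (distr (density M p) borel X)"
proof -
  have ip: "integrable M p" by (rule integrable_const_bound[where B=B]) (use nn bd in auto)
  have "emeasure (density M p) (space (density M p)) = 1"
  proof -
    have "emeasure (density M p) (space (density M p)) = (\<integral>\<^sup>+ x. ennreal (p x) * indicator (space M) x \<partial>M)"
      by (simp add: emeasure_density)
    also have "\<dots> = (\<integral>\<^sup>+ x. ennreal (p x) \<partial>M)"
      by (intro nn_integral_cong) auto
    also have "\<dots> = ennreal (\<integral>\<omega>. p \<omega> \<partial>M)"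
      using ip nn by (intro nn_integral_eq_integral) auto
    finally show ?thesis using one by simp
  qed
  then have "prob_space (density M p)" by (intro prob_spaceI) simp
  then interpret D: prob_space "density M p" .
  show ?thesis unfolding real_distribution_def real_distribution_axioms_def
    by (auto intro!: D.prob_space_distr)
qed

lemma char_distr_density:
  fixes p :: "'a \<Rightarrow> real"
  assumes [measurable]: "p \<in> borel_measurable M" "X \<in> borel_measurable M"
    and nn: "\<And>\<omega>. 0 \<le> p \<omega>"
  shows "char (distr (density M p) borel X) u = (CLINT \<omega>|M. p \<omega> *\<^sub>R iexp (u * X \<omega>))"
  unfolding char_def
  by (subst integral_distr) (auto simp: integral_density nn)

lemma U_real:
  fixes \<psi> :: "'a \<Rightarrow> real"
  assumes Xm[measurable]: "X \<in> borel_measurable M" and pm[measurable]: "\<psi> \<in> borel_measurable M"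
    and bd: "\<And>\<omega>. \<bar>\<psi> \<omega>\<bar> \<le> B"
    and z: "\<And>u. (CLINT \<omega>|M. \<psi> \<omega> *\<^sub>R iexp (u * X \<omega>)) = 0"
    and A[measurable]: "A \<in> sets borel"
  shows "(\<integral>\<omega>. indicator A (X \<omega>) * \<psi> \<omega> \<partial>M) = 0"
proof -
  define p where "p \<omega> = max (\<psi> \<omega>) 0" for \<omega>
  define n where "n \<omega> = max (- \<psi> \<omega>) 0" for \<omega>
  have [measurable]: "p \<in> borel_measurable M" "n \<in> borel_measurable M" unfolding p_def n_def by auto
  have pn: "\<psi> \<omega> = p \<omega> - n \<omega>" for \<omega> unfolding p_def n_def by auto
  have pnn: "0 \<le> p \<omega>" "0 \<le> n \<omega>" for \<omega> unfolding p_def n_def by auto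
  have pb: "p \<omega> \<le> B" "n \<omega> \<le> B" for \<omega> unfolding p_def n_def using bd[of \<omega>] by auto
  have B0: "0 \<le> B" using bd[of undefined] by simp
  have ip: "integrable M p" by (rule integrable_const_bound[where B=B]) (use pnn pb in auto)
  have inn: "integrable M n" by (rule integrable_const_bound[where B=B]) (use pnn pb in auto)
  have ipc: "integrable M (\<lambda>\<omega>. p \<omega> *\<^sub>R iexp (u * X \<omega>))" for u
    by (rule integrable_const_bound[where B=B]) (use pnn pb in \<open>auto simp: norm_mult\<close>)
  have inc: "integrable M (\<lambda>\<omega>. n \<omega> *\<^sub>R iexp (u * X \<omega>))" for u
    by (rule integrable_const_bound[where B=B]) (use pnn pb in \<open>auto simp: norm_mult\<close>)
  have eqc: "(CLINT \<omega>|M. p \<omega> *\<^sub>R iexp (u * X \<omega>)) = (CLINT \<omega>|M. n \<omega> *\<^sub>R iexp (u * X \<omega>))" for u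
  proof -
    have "(CLINT \<omega>|M. p \<omega> *\<^sub>R iexp (u * X \<omega>)) - (CLINT \<omega>|M. n \<omega> *\<^sub>R iexp (u * X \<omega>))
        = (CLINT \<omega>|M. \<psi> \<omega> *\<^sub>R iexp (u * X \<omega>))"
      using ipc inc by (subst Bochner_Integration.integral_diff[symmetric]) (auto simp: pn scaleR_diff_left)
    then show ?thesis using z[of u] by simp
  qed
  have ipa: "integrable M (\<lambda>\<omega>. indicator A (X \<omega>) * p \<omega>)"
    by (rule integrable_const_bound[where B=B]) (use pnn pb B0 in \<open>auto simp: indicator_def\<close>)
  have ina: "integrable M (\<lambda>\<omega>. indicator A (X \<omega>) * n \<omega>)"
    by (rule integrable_const_bound[where B=B]) (use pnn pb B0 in \<open>auto simp: indicator_def\<close>)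
  have mpn: "(\<integral>\<omega>. p \<omega> \<partial>M) = (\<integral>\<omega>. n \<omega> \<partial>M)"
    using eqc[of 0] by (simp add: scaleR_conv_of_real)
  define m where "m = (\<integral>\<omega>. p \<omega> \<partial>M)"
  have m0: "m \<ge> 0" unfolding m_def using pnn by simp
  have goal: "(\<integral>\<omega>. indicator A (X \<omega>) * p \<omega> \<partial>M) = (\<integral>\<omega>. indicator A (X \<omega>) * n \<omega> \<partial>M)"
  proof (cases "m = 0")
    case True
    then have "AE \<omega> in M. p \<omega> = 0" using integral_nonneg_eq_0_iff_AE[OF ip] pnn unfolding m_def by auto
    moreover have "AE \<omega> in M. n \<omega> = 0" using integral_nonneg_eq_0_iff_AE[OF inn] pnn True mpn unfolding m_def by auto
    ultimately have "AE \<omega> in M. indicator A (X \<omega>) * p \<omega> = indicator A (X \<omega>) * n \<omega>" by auto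
    then show ?thesis by (intro integral_cong_AE) auto
  next
    case False
    then have mp: "m > 0" using m0 by simp
    define P where "P = distr (density M (\<lambda>\<omega>. p \<omega> / m)) borel X"
    define N where "N = distr (density M (\<lambda>\<omega>. n \<omega> / m)) borel X"
    have rP: "real_distribution P" unfolding P_def
      by (rule distr_density_real_distribution[where B="B/m"]) (use mp pnn pb in \<open>auto simp: m_def divide_right_mono\<close>)
    have rN: "real_distribution N" unfolding N_def
      by (rule distr_density_real_distribution[where B="B/m"]) (use mp pnn pb mpn in \<open>auto simp: m_def divide_right_mono\<close>)
    have "char P = char N"
    proof
      fix u
      have "char P u = (CLINT \<omega>|M. (1/m) *\<^sub>R (p \<omega> *\<^sub>R iexp (u * X \<omega>)))"
        unfolding P_def using mp pnn by (subst char_distr_density) (auto simp: divide_inverse mult.commute)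
      also have "\<dots> = (CLINT \<omega>|M. (1/m) *\<^sub>R (n \<omega> *\<^sub>R iexp (u * X \<omega>)))"
        by (simp only: integral_scaleR_right eqc)
      also have "\<dots> = char N u"
        unfolding N_def using mp pnn by (subst char_distr_density) (auto simp: divide_inverse mult.commute)
      finally show "char P u = char N u" .
    qed
    then have "P = N" using Levy_uniqueness rP rN by blast
    then have "measure P A = measure N A" by simp
    moreover have "measure P A = (\<integral>\<omega>. indicator A (X \<omega>) * p \<omega> \<partial>M) / m"
    proof -
      have "measure P A = (\<integral>x. indicator A x \<partial>P)" using A unfolding P_def by simp
      also have "\<dots> = (\<integral>\<omega>. (p \<omega> / m) * indicator A (X \<omega>) \<partial>M)"
        unfolding P_def using mp pnn by (subst integral_distr) (auto simp: integral_density)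
      also have "\<dots> = (\<integral>\<omega>. indicator A (X \<omega>) * p \<omega> \<partial>M) / m"
        by (simp add: mult.commute)
      finally show ?thesis .
    qed
    moreover have "measure N A = (\<integral>\<omega>. indicator A (X \<omega>) * n \<omega> \<partial>M) / m"
    proof -
      have "measure N A = (\<integral>x. indicator A x \<partial>N)" using A unfolding N_def by simp
      also have "\<dots> = (\<integral>\<omega>. (n \<omega> / m) * indicator A (X \<omega>) \<partial>M)"
        unfolding N_def using mp pnn by (subst integral_distr) (auto simp: integral_density)
      also have "\<dots> = (\<integral>\<omega>. indicator A (X \<omega>) * n \<omega> \<partial>M) / m"
        by (simp add: mult.commute)
      finally show ?thesis .
    qed
    ultimately show ?thesis using mp by simp
  qed
  have "(\<integral>\<omega>. indicator A (X \<omega>) * \<psi> \<omega> \<partial>M) =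
        (\<integral>\<omega>. indicator A (X \<omega>) * p \<omega> \<partial>M) - (\<integral>\<omega>. indicator A (X \<omega>) * n \<omega> \<partial>M)"
    using ipa ina by (subst Bochner_Integration.integral_diff[symmetric]) (auto simp: pn right_diff_distrib)
  then show ?thesis using goal by simp
qed


lemma cnj_iexp: "cnj (iexp t) = iexp (- t)"
  by (simp add: exp_cnj)

lemma U_complex:
  fixes \<psi>1 \<psi>2 :: "'a \<Rightarrow> complex"
  assumes Xm[measurable]: "X \<in> borel_measurable M"
    and m1[measurable]: "\<psi>1 \<in> borel_measurable M" and m2[measurable]: "\<psi>2 \<in> borel_measurable M"
    and b1: "\<And>\<omega>. norm (\<psi>1 \<omega>) \<le> B" and b2: "\<And>\<omega>. norm (\<psi>2 \<omega>) \<le> B"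
    and eq: "\<And>u. (CLINT \<omega>|M. iexp (u * X \<omega>) * \<psi>1 \<omega>) = (CLINT \<omega>|M. iexp (u * X \<omega>) * \<psi>2 \<omega>)"
    and A[measurable]: "A \<in> sets borel"
  shows "(CLINT \<omega>|M. indicator A (X \<omega>) *\<^sub>R \<psi>1 \<omega>) = (CLINT \<omega>|M. indicator A (X \<omega>) *\<^sub>R \<psi>2 \<omega>)"
proof -
  define \<psi> where "\<psi> \<omega> = \<psi>1 \<omega> - \<psi>2 \<omega>" for \<omega>
  have [measurable]: "\<psi> \<in> borel_measurable M" unfolding \<psi>_def by simp
  have bd: "norm (\<psi> \<omega>) \<le> 2 * B" for \<omega> unfolding \<psi>_def
    using norm_triangle_ineq4[of "\<psi>1 \<omega>" "\<psi>2 \<omega>"] b1[of \<omega>] b2[of \<omega>] by simp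
  have B0: "0 \<le> B" using b1[of undefined] norm_ge_zero order_trans by blast
  have int_iexp: "integrable M (\<lambda>\<omega>. iexp (u * X \<omega>) * f \<omega>)"
    if [measurable]: "f \<in> borel_measurable M" and "\<And>\<omega>. norm (f \<omega>) \<le> C" for f :: "'a \<Rightarrow> complex" and u C
    by (rule integrable_const_bound[where B=C]) (use that in \<open>auto simp: norm_mult\<close>)
  have z: "(CLINT \<omega>|M. iexp (u * X \<omega>) * \<psi> \<omega>) = 0" for u
  proof -
    have "(CLINT \<omega>|M. iexp (u * X \<omega>) * \<psi> \<omega>) =
      (CLINT \<omega>|M. iexp (u * X \<omega>) * \<psi>1 \<omega>) - (CLINT \<omega>|M. iexp (u * X \<omega>) * \<psi>2 \<omega>)"
      unfolding \<psi>_def right_diff_distrib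
      by (rule Bochner_Integration.integral_diff[OF int_iexp[OF m1 b1] int_iexp[OF m2 b2]])
    then show ?thesis using eq[of u] by simp
  qed
  have zc: "(CLINT \<omega>|M. iexp (u * X \<omega>) * cnj (\<psi> \<omega>)) = 0" for u
  proof -
    have "(CLINT \<omega>|M. iexp (u * X \<omega>) * cnj (\<psi> \<omega>)) = (CLINT \<omega>|M. cnj (iexp ((-u) * X \<omega>) * \<psi> \<omega>))"
    proof -
      have "\<And>\<omega>. cnj (iexp ((-u) * X \<omega>) * \<psi> \<omega>) = iexp (u * X \<omega>) * cnj (\<psi> \<omega>)"
        by (simp only: complex_cnj_mult cnj_iexp) simp
      then show ?thesis by (simp only:)
    qed
    also have "\<dots> = cnj (CLINT \<omega>|M. iexp ((-u) * X \<omega>) * \<psi> \<omega>)" by (rule Bochner_Integration.integral_cnj)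
    finally show ?thesis using z[of "-u"] by simp
  qed
  have cnjm[measurable]: "cnj \<in> borel_measurable borel"
    by (rule borel_measurable_continuous_onI) (intro continuous_intros)
  have icnj: "integrable M (\<lambda>\<omega>. iexp (u * X \<omega>) * cnj (\<psi> \<omega>))" for u
    by (rule int_iexp[of "\<lambda>\<omega>. cnj (\<psi> \<omega>)" "2*B"]) (use bd in auto)
  have ipsi: "integrable M (\<lambda>\<omega>. iexp (u * X \<omega>) * \<psi> \<omega>)" for u
    using int_iexp[OF _ bd] by simp
  have re: "(CLINT \<omega>|M. Re (\<psi> \<omega>) *\<^sub>R iexp (u * X \<omega>)) = 0" for u
  proof -
    have pw: "\<And>\<omega>. Re (\<psi> \<omega>) *\<^sub>R iexp (u * X \<omega>) = (iexp (u * X \<omega>) * \<psi> \<omega> + iexp (u * X \<omega>) * cnj (\<psi> \<omega>)) / 2"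
      by (simp add: scaleR_conv_of_real distrib_left[symmetric] complex_add_cnj)
    have "(CLINT \<omega>|M. Re (\<psi> \<omega>) *\<^sub>R iexp (u * X \<omega>)) =
       (CLINT \<omega>|M. (iexp (u * X \<omega>) * \<psi> \<omega> + iexp (u * X \<omega>) * cnj (\<psi> \<omega>)) / 2)"
      by (simp only: pw)
    also have "\<dots> = (CLINT \<omega>|M. (iexp (u * X \<omega>) * \<psi> \<omega> + iexp (u * X \<omega>) * cnj (\<psi> \<omega>))) / 2"
      by (rule integral_divide_zero)
    also have "\<dots> = ((CLINT \<omega>|M. iexp (u * X \<omega>) * \<psi> \<omega>) + (CLINT \<omega>|M. iexp (u * X \<omega>) * cnj (\<psi> \<omega>))) / 2"
      by (subst Bochner_Integration.integral_add[OF ipsi icnj]) (rule refl)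
    finally show ?thesis using z zc by simp
  qed
  have im: "(CLINT \<omega>|M. Im (\<psi> \<omega>) *\<^sub>R iexp (u * X \<omega>)) = 0" for u
  proof -
    have pw: "\<And>\<omega>. Im (\<psi> \<omega>) *\<^sub>R iexp (u * X \<omega>) = (iexp (u * X \<omega>) * \<psi> \<omega> - iexp (u * X \<omega>) * cnj (\<psi> \<omega>)) / (2 * \<i>)"
    proof -
      fix \<omega>
      have "iexp (u * X \<omega>) * \<psi> \<omega> - iexp (u * X \<omega>) * cnj (\<psi> \<omega>) = iexp (u * X \<omega>) * (complex_of_real (2 * Im (\<psi> \<omega>)) * \<i>)"
        by (simp only: right_diff_distrib[symmetric] complex_diff_cnj)
      then show "Im (\<psi> \<omega>) *\<^sub>R iexp (u * X \<omega>) = (iexp (u * X \<omega>) * \<psi> \<omega> - iexp (u * X \<omega>) * cnj (\<psi> \<omega>)) / (2 * \<i>)"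
        by (simp add: scaleR_conv_of_real algebra_simps)
    qed
    have "(CLINT \<omega>|M. Im (\<psi> \<omega>) *\<^sub>R iexp (u * X \<omega>)) =
       (CLINT \<omega>|M. (iexp (u * X \<omega>) * \<psi> \<omega> - iexp (u * X \<omega>) * cnj (\<psi> \<omega>)) / (2 * \<i>))"
      by (simp only: pw)
    also have "\<dots> = (CLINT \<omega>|M. (iexp (u * X \<omega>) * \<psi> \<omega> - iexp (u * X \<omega>) * cnj (\<psi> \<omega>))) / (2 * \<i>)"
      by (rule integral_divide_zero)
    also have "\<dots> = ((CLINT \<omega>|M. iexp (u * X \<omega>) * \<psi> \<omega>) - (CLINT \<omega>|M. iexp (u * X \<omega>) * cnj (\<psi> \<omega>))) / (2 * \<i>)"
      by (subst Bochner_Integration.integral_diff[OF ipsi icnj]) (rule refl)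
    finally show ?thesis using z zc by simp
  qed
  have bre: "\<bar>Re (\<psi> \<omega>)\<bar> \<le> 2 * B" for \<omega> using abs_Re_le_cmod[of "\<psi> \<omega>"] bd[of \<omega>] by linarith
  have bim: "\<bar>Im (\<psi> \<omega>)\<bar> \<le> 2 * B" for \<omega> using abs_Im_le_cmod[of "\<psi> \<omega>"] bd[of \<omega>] by linarith
  have r0: "(\<integral>\<omega>. indicator A (X \<omega>) * Re (\<psi> \<omega>) \<partial>M) = 0"
    by (rule U_real[OF Xm _ bre re A]) simp
  have i0: "(\<integral>\<omega>. indicator A (X \<omega>) * Im (\<psi> \<omega>) \<partial>M) = 0"
    by (rule U_real[OF Xm _ bim im A]) simp
  have ia: "integrable M (\<lambda>\<omega>. indicator A (X \<omega>) *\<^sub>R \<psi> \<omega>)"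
    by (rule integrable_const_bound[where B="2*B"]) (use bd B0 in \<open>auto simp: indicator_def\<close>)
  have "(CLINT \<omega>|M. indicator A (X \<omega>) *\<^sub>R \<psi> \<omega>) = 0"
  proof (rule complex_eqI)
    show "Re (CLINT \<omega>|M. indicator A (X \<omega>) *\<^sub>R \<psi> \<omega>) = Re 0"
      using r0 integral_Re[OF ia] by simp
    show "Im (CLINT \<omega>|M. indicator A (X \<omega>) *\<^sub>R \<psi> \<omega>) = Im 0"
      using i0 integral_Im[OF ia] by simp
  qed
  moreover have "(CLINT \<omega>|M. indicator A (X \<omega>) *\<^sub>R \<psi> \<omega>) =
     (CLINT \<omega>|M. indicator A (X \<omega>) *\<^sub>R \<psi>1 \<omega>) - (CLINT \<omega>|M. indicator A (X \<omega>) *\<^sub>R \<psi>2 \<omega>)"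
    unfolding \<psi>_def scaleR_diff_right
    by (rule Bochner_Integration.integral_diff; rule integrable_const_bound[where B=B]) (use b1 b2 B0 in \<open>auto simp: indicator_def\<close>)
  ultimately show ?thesis by simp
qed

end


lemma iexp_add: "iexp (a + b) = iexp a * iexp b"
  by (simp add: distrib_left exp_add)

lemma norm_iexp[simp]: "norm (iexp t) = 1"
  by (simp add: norm_exp_i_times)

lemma prod_indicator_if:
  "finite S \<Longrightarrow> (\<Prod>k\<in>S. indicator (B k) (V k \<omega>) :: real) = (if \<forall>k\<in>S. V k \<omega> \<in> B k then 1 else 0)"
  by (induction S rule: finite_induct) (auto simp: indicator_def)

lemma prod_indicator_bounds:
  "0 \<le> (\<Prod>k\<in>S. indicator (B k) (V k \<omega>) :: real)" "(\<Prod>k\<in>S. indicator (B k) (V k \<omega>) :: real) \<le> 1"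
  by (cases "finite S"; simp add: prod_indicator_if)+

context prob_space begin

lemma norm_integral_iexp: "norm (CLINT \<omega>|M. iexp (f \<omega>)) \<le> 1"
proof -
  have "norm (CLINT \<omega>|M. iexp (f \<omega>)) \<le> (\<integral>\<omega>. norm (iexp (f \<omega>)) \<partial>M)"
    by (rule integral_norm_bound)
  then show ?thesis by (simp add: prob_space)
qed

lemma indep_cf:
  fixes V :: "'i \<Rightarrow> 'a \<Rightarrow> real" and Z :: "'a \<Rightarrow> real"
  assumes fI: "finite I" and Vm[measurable]: "\<And>k. V k \<in> borel_measurable M"
    and Zm[measurable]: "Z \<in> borel_measurable M"
    and fac: "\<And>s v. (CLINT \<omega>|M. iexp ((\<Sum>k\<in>I. s k * V k \<omega>) + v * Z \<omega>)) =
        (CLINT \<omega>|M. iexp (\<Sum>k\<in>I. s k * V k \<omega>)) * (CLINT \<omega>|M. iexp (v * Z \<omega>))"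
    and Bm[measurable]: "\<And>k. B k \<in> sets borel" and Cm[measurable]: "C \<in> sets borel"
  shows "prob {\<omega>\<in>space M. (\<forall>k\<in>I. V k \<omega> \<in> B k) \<and> Z \<omega> \<in> C} =
     prob {\<omega>\<in>space M. \<forall>k\<in>I. V k \<omega> \<in> B k} * prob {\<omega>\<in>space M. Z \<omega> \<in> C}"
proof -
  define Q where "Q S \<longleftrightarrow> (\<forall>s v. (CLINT \<omega>|M. (\<Prod>k\<in>S. indicator (B k) (V k \<omega>) :: real) *\<^sub>R
        (iexp (\<Sum>k\<in>I-S. s k * V k \<omega>) * iexp (v * Z \<omega>))) =
      (CLINT \<omega>|M. (\<Prod>k\<in>S. indicator (B k) (V k \<omega>) :: real) *\<^sub>R iexp (\<Sum>k\<in>I-S. s k * V k \<omega>)) *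
      (CLINT \<omega>|M. iexp (v * Z \<omega>)))" for S
  have "Q I"
    using fI subset_refl
  proof (induction I rule: finite_subset_induct')
    case empty
    show ?case unfolding Q_def using fac by (simp only: iexp_add prod.empty scaleR_one Diff_empty) blast
  next
    case (insert j S)
    show ?case unfolding Q_def
    proof (intro allI)
      fix s v
      define T where "T = I - insert j S"
      have IS: "I - S = insert j T" "j \<notin> T" "finite T" using insert fI unfolding T_def by auto
      define c where "c = (CLINT \<omega>|M. iexp (v * Z \<omega>))"
      have cb: "norm c \<le> 1" unfolding c_def by (rule norm_integral_iexp)
      define P where "P \<omega> = (\<Prod>k\<in>S. indicator (B k) (V k \<omega>) :: real)" for \<omega>
      have [measurable]: "P \<in> borel_measurable M" unfolding P_def by measurable
      define \<psi>1 where "\<psi>1 \<omega> = P \<omega> *\<^sub>R (iexp (\<Sum>k\<in>T. s k * V k \<omega>) * iexp (v * Z \<omega>))" for \<omega>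
      define \<psi>2 where "\<psi>2 \<omega> = P \<omega> *\<^sub>R iexp (\<Sum>k\<in>T. s k * V k \<omega>) * c" for \<omega>
      have [measurable]: "\<psi>1 \<in> borel_measurable M" "\<psi>2 \<in> borel_measurable M"
        unfolding \<psi>1_def \<psi>2_def by measurable
      have Pb: "\<bar>P \<omega>\<bar> \<le> 1" for \<omega> unfolding P_def using prod_indicator_bounds by (metis abs_of_nonneg)
      have b1: "norm (\<psi>1 \<omega>) \<le> 1" for \<omega> unfolding \<psi>1_def using Pb[of \<omega>] by (simp add: norm_mult)
      have b2: "norm (\<psi>2 \<omega>) \<le> 1" for \<omega> unfolding \<psi>2_def using Pb[of \<omega>] cb
        by (simp add: norm_mult mult_le_one)
      have sumT: "(\<Sum>k\<in>I-S. (s(j:=u)) k * V k \<omega>) = u * V j \<omega> + (\<Sum>k\<in>T. s k * V k \<omega>)" for u \<omega>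
        using IS by (simp add: sum.insert) (intro sum.cong; auto)
      have eq: "(CLINT \<omega>|M. iexp (u * V j \<omega>) * \<psi>1 \<omega>) = (CLINT \<omega>|M. iexp (u * V j \<omega>) * \<psi>2 \<omega>)" for u
      proof -
        have "(CLINT \<omega>|M. iexp (u * V j \<omega>) * \<psi>1 \<omega>) =
          (CLINT \<omega>|M. P \<omega> *\<^sub>R (iexp (\<Sum>k\<in>I-S. (s(j:=u)) k * V k \<omega>) * iexp (v * Z \<omega>)))"
          unfolding \<psi>1_def sumT iexp_add by (simp add: ac_simps)
        also have "\<dots> = (CLINT \<omega>|M. P \<omega> *\<^sub>R iexp (\<Sum>k\<in>I-S. (s(j:=u)) k * V k \<omega>)) * c"
          using insert.IH unfolding Q_def P_def c_def by blast
        also have "\<dots> = (CLINT \<omega>|M. (P \<omega> *\<^sub>R iexp (\<Sum>k\<in>I-S. (s(j:=u)) k * V k \<omega>)) * c)"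
          by (rule integral_mult_left_zero[symmetric])
        also have "\<dots> = (CLINT \<omega>|M. iexp (u * V j \<omega>) * \<psi>2 \<omega>)"
          unfolding \<psi>2_def sumT iexp_add by (simp add: ac_simps)
        finally show ?thesis .
      qed
      have U: "(CLINT \<omega>|M. indicator (B j) (V j \<omega>) *\<^sub>R \<psi>1 \<omega>) = (CLINT \<omega>|M. indicator (B j) (V j \<omega>) *\<^sub>R \<psi>2 \<omega>)"
        by (rule U_complex[OF Vm _ _ b1 b2 eq Bm]) simp_all
      have pi: "\<And>\<omega>. (\<Prod>k\<in>insert j S. indicator (B k) (V k \<omega>) :: real) = indicator (B j) (V j \<omega>) * P \<omega>"
        unfolding P_def using insert by simp
      have "(CLINT \<omega>|M. (\<Prod>k\<in>insert j S. indicator (B k) (V k \<omega>) :: real) *\<^sub>R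
        (iexp (\<Sum>k\<in>I-insert j S. s k * V k \<omega>) * iexp (v * Z \<omega>))) =
        (CLINT \<omega>|M. indicator (B j) (V j \<omega>) *\<^sub>R \<psi>1 \<omega>)"
        unfolding pi \<psi>1_def T_def by simp
      also have "\<dots> = (CLINT \<omega>|M. indicator (B j) (V j \<omega>) *\<^sub>R \<psi>2 \<omega>)" by (rule U)
      also have "\<dots> = (CLINT \<omega>|M. ((\<Prod>k\<in>insert j S. indicator (B k) (V k \<omega>) :: real) *\<^sub>R
           iexp (\<Sum>k\<in>I-insert j S. s k * V k \<omega>)) * c)"
        unfolding pi \<psi>2_def T_def by simp
      also have "\<dots> = (CLINT \<omega>|M. (\<Prod>k\<in>insert j S. indicator (B k) (V k \<omega>) :: real) *\<^sub>R
           iexp (\<Sum>k\<in>I-insert j S. s k * V k \<omega>)) * c"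
        by (rule integral_mult_left_zero)
      finally show "(CLINT \<omega>|M. (\<Prod>k\<in>insert j S. indicator (B k) (V k \<omega>) :: real) *\<^sub>R
        (iexp (\<Sum>k\<in>I-insert j S. s k * V k \<omega>) * iexp (v * Z \<omega>))) =
        (CLINT \<omega>|M. (\<Prod>k\<in>insert j S. indicator (B k) (V k \<omega>) :: real) *\<^sub>R iexp (\<Sum>k\<in>I-insert j S. s k * V k \<omega>)) *
        (CLINT \<omega>|M. iexp (v * Z \<omega>))"
        unfolding c_def .
    qed
  qed
  define P where "P \<omega> = (\<Prod>k\<in>I. indicator (B k) (V k \<omega>) :: real)" for \<omega>
  have [measurable]: "P \<in> borel_measurable M" unfolding P_def by measurable
  have Pb: "\<bar>P \<omega>\<bar> \<le> 1" for \<omega> unfolding P_def using prod_indicator_bounds by (metis abs_of_nonneg)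
  define e where "e = (\<integral>\<omega>. P \<omega> \<partial>M)"
  have eb: "\<bar>e\<bar> \<le> 1"
  proof -
    have "\<bar>e\<bar> \<le> (\<integral>\<omega>. \<bar>P \<omega>\<bar> \<partial>M)" unfolding e_def by (rule integral_abs_bound)
    also have "\<dots> \<le> (\<integral>\<omega>. 1 \<partial>M)"
      by (rule integral_mono) (use Pb in \<open>auto intro!: integrable_const_bound[where B=1]\<close>)
    finally show ?thesis by (simp add: prob_space)
  qed
  have QI: "(CLINT \<omega>|M. P \<omega> *\<^sub>R iexp (v * Z \<omega>)) = complex_of_real e * (CLINT \<omega>|M. iexp (v * Z \<omega>))" for v
  proof -
    have P1: "(\<lambda>\<omega>. (\<Prod>k\<in>I. indicator (B k) (V k \<omega>) :: real)) = P" unfolding P_def by simp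
    have "(CLINT \<omega>|M. P \<omega> *\<^sub>R (iexp 0 * iexp (v * Z \<omega>))) = (CLINT \<omega>|M. P \<omega> *\<^sub>R iexp 0) * (CLINT \<omega>|M. iexp (v * Z \<omega>))"
      using \<open>Q I\<close> unfolding Q_def by (simp only: Diff_cancel sum.empty P_def)
    moreover have "(CLINT \<omega>|M. P \<omega> *\<^sub>R iexp 0) = complex_of_real e"
      unfolding e_def by (simp add: scaleR_conv_of_real)
    ultimately show ?thesis by simp
  qed
  have eq: "(CLINT \<omega>|M. iexp (v * Z \<omega>) * complex_of_real (P \<omega>)) =
      (CLINT \<omega>|M. iexp (v * Z \<omega>) * complex_of_real e)" for v
    using QI[of v] by (simp add: scaleR_conv_of_real ac_simps)
  have "(CLINT \<omega>|M. indicator C (Z \<omega>) *\<^sub>R complex_of_real (P \<omega>)) =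
      (CLINT \<omega>|M. indicator C (Z \<omega>) *\<^sub>R complex_of_real e)"
    by (rule U_complex[OF Zm _ _ _ _ eq Cm, where B=1]) (use Pb eb in auto)
  then have key: "(\<integral>\<omega>. indicator C (Z \<omega>) * P \<omega> \<partial>M) = (\<integral>\<omega>. indicator C (Z \<omega>) \<partial>M) * e"
    by (simp add: scaleR_conv_of_real of_real_mult[symmetric] del: of_real_mult)
  have sk: "{\<omega>\<in>space M. V k \<omega> \<in> B k} \<in> sets M" for k
    using measurable_sets_Collect[OF Vm[of k], of "\<lambda>x. x \<in> B k"] Bm[of k] by simp
  have sz: "{\<omega>\<in>space M. Z \<omega> \<in> C} \<in> sets M"
    using measurable_sets_Collect[OF Zm, of "\<lambda>x. x \<in> C"] Cm by simp
  have s2: "{\<omega>\<in>space M. \<forall>k\<in>I. V k \<omega> \<in> B k} \<in> sets M"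
    by (rule sets.sets_Collect_finite_All[OF sk fI])
  have s1: "{\<omega>\<in>space M. (\<forall>k\<in>I. V k \<omega> \<in> B k) \<and> Z \<omega> \<in> C} \<in> sets M"
  proof -
    have "{\<omega>\<in>space M. (\<forall>k\<in>I. V k \<omega> \<in> B k) \<and> Z \<omega> \<in> C} =
      {\<omega>\<in>space M. \<forall>k\<in>I. V k \<omega> \<in> B k} \<inter> {\<omega>\<in>space M. Z \<omega> \<in> C}" by auto
    then show ?thesis using sets.Int[OF s2 sz] by simp
  qed
  have s3: "{\<omega>\<in>space M. Z \<omega> \<in> C} \<in> sets M" by (rule sz)
  have pi: "prob A = (\<integral>\<omega>. indicator A \<omega> \<partial>M)" if "A \<in> sets M" for A
    using that by simp
  have "prob {\<omega>\<in>space M. (\<forall>k\<in>I. V k \<omega> \<in> B k) \<and> Z \<omega> \<in> C} = (\<integral>\<omega>. indicator C (Z \<omega>) * P \<omega> \<partial>M)"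
    unfolding pi[OF s1] by (intro Bochner_Integration.integral_cong) (auto simp: P_def prod_indicator_if[OF fI] split: split_indicator)
  moreover have "prob {\<omega>\<in>space M. \<forall>k\<in>I. V k \<omega> \<in> B k} = e"
    unfolding pi[OF s2] e_def by (intro Bochner_Integration.integral_cong) (auto simp: P_def prod_indicator_if[OF fI] split: split_indicator)
  moreover have "prob {\<omega>\<in>space M. Z \<omega> \<in> C} = (\<integral>\<omega>. indicator C (Z \<omega>) \<partial>M)"
    unfolding pi[OF s3] by (intro Bochner_Integration.integral_cong) (auto simp: indicator_def)
  ultimately show ?thesis using key by simp
qed

end


definition cf_gauss :: "'a measure \<Rightarrow> ('a \<Rightarrow> real) \<Rightarrow> real \<Rightarrow> bool" where
  "cf_gauss M X v \<longleftrightarrow> X \<in> borel_measurable M \<and> 0 \<le> v \<and>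
     (\<forall>u. cf M X u = complex_of_real (exp (-(u^2 * v)/2)))"

context prob_space begin

lemma cf_conv:
  assumes [measurable]: "\<And>n. Xn n \<in> borel_measurable M" "X \<in> borel_measurable M"
    and lim: "AE \<omega> in M. (\<lambda>n. Xn n \<omega>) \<longlonglongrightarrow> X \<omega>"
  shows "(\<lambda>n. cf M (Xn n) u) \<longlonglongrightarrow> cf M X u"
  unfolding cf_def
proof (rule integral_dominated_convergence[where w="\<lambda>_. 1"])
  show "AE x in M. (\<lambda>i. iexp (u * Xn i x)) \<longlonglongrightarrow> iexp (u * X x)"
    using lim by eventually_elim (intro tendsto_intros)
qed auto

lemma cf_zero: "cf M X 0 = 1"
  unfolding cf_def by (simp add: prob_space)

lemma cf_gauss_unique: "cf_gauss M X v \<Longrightarrow> cf_gauss M X w \<Longrightarrow> v = w"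
  unfolding cf_gauss_def by (metis exp_inj_iff of_real_eq_iff power_one mult_1 neg_equal_iff_equal
      divide_cancel_right zero_neq_numeral)

lemma cf_limit:
  assumes [measurable]: "\<And>n. Xn n \<in> borel_measurable M" "X \<in> borel_measurable M"
    and lim: "AE \<omega> in M. (\<lambda>n. Xn n \<omega>) \<longlonglongrightarrow> X \<omega>"
    and g: "\<And>n. cf_gauss M (Xn n) (v n)"
  shows "\<exists>w. v \<longlonglongrightarrow> w \<and> cf_gauss M X w"
proof -
  have cfX: "(\<lambda>n. exp (-(u^2 * v n)/2)) \<longlonglongrightarrow> Re (cf M X u)" for u
  proof -
    have "(\<lambda>n. Re (cf M (Xn n) u)) \<longlonglongrightarrow> Re (cf M X u)"
      by (intro tendsto_Re cf_conv[OF assms(1,2) lim])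
    then show ?thesis using g unfolding cf_gauss_def by simp
  qed
  have v0: "0 \<le> v n" for n using g unfolding cf_gauss_def by simp
  define r where "r u = Re (cf M X u)" for u
  have rpow: "r (1 / real (Suc m)) ^ ((Suc m)^2) = r 1" for m
  proof -
    have "(\<lambda>n. exp (-((1 / real (Suc m))^2 * v n)/2) ^ ((Suc m)^2)) \<longlonglongrightarrow> r (1 / real (Suc m)) ^ ((Suc m)^2)"
      unfolding r_def by (intro tendsto_power cfX)
    moreover have "exp (-((1 / real (Suc m))^2 * v n)/2) ^ ((Suc m)^2) = exp (-(1^2 * v n)/2)" for n
    proof -
      have "exp (-((1 / real (Suc m))^2 * v n)/2) ^ ((Suc m)^2) = exp (real ((Suc m)^2) * (-((1 / real (Suc m))^2 * v n)/2))"
        by (simp only: exp_of_nat_mult)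
      also have "real ((Suc m)^2) * (-((1 / real (Suc m))^2 * v n)/2) = -(1^2 * v n)/2"
        by (simp add: power_divide of_nat_power del: of_nat_Suc)
      finally show ?thesis .
    qed
    ultimately have "(\<lambda>n. exp (-(1^2 * v n)/2)) \<longlonglongrightarrow> r (1 / real (Suc m)) ^ ((Suc m)^2)" by simp
    then show ?thesis using cfX[of 1] unfolding r_def by (rule LIMSEQ_unique)
  qed
  have r1pos: "r 1 > 0"
  proof (rule ccontr)
    assume "\<not> r 1 > 0"
    moreover have "r 1 \<ge> 0" using cfX[of 1] unfolding r_def
      by (rule LIMSEQ_le_const) auto
    ultimately have "r 1 = 0" by simp
    then have rz: "r (1 / real (Suc m)) = 0" for m using rpow[of m] by simp
    have "(\<lambda>m. cf M X (1 / real (Suc m))) \<longlonglongrightarrow> cf M X 0"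
    proof -
      have "(\<lambda>m. (1::real) / real (Suc m)) \<longlonglongrightarrow> 0" by (rule LIMSEQ_Suc[OF lim_inverse_n'])
      then have h: "(\<lambda>m. 1 / real (Suc m) * X x) \<longlonglongrightarrow> 0 * X x" for x
        by (intro tendsto_intros)
      have h2: "(\<lambda>m. iexp (1 / real (Suc m) * X x)) \<longlonglongrightarrow> iexp (0 * X x)" for x
        by (intro tendsto_intros h)
      have "(\<lambda>m. CLINT \<omega>|M. iexp (1 / real (Suc m) * X \<omega>)) \<longlonglongrightarrow> (CLINT \<omega>|M. iexp (0 * X \<omega>))"
        by (rule integral_dominated_convergence[where w="\<lambda>_. 1"]) (use h2 in auto)
      then show ?thesis unfolding cf_def .
    qed
    then have "(\<lambda>m. r (1 / real (Suc m))) \<longlonglongrightarrow> Re (cf M X 0)" unfolding r_def by (rule tendsto_Re)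
    then have "(\<lambda>m. 0::real) \<longlonglongrightarrow> 1" using rz cf_zero by simp
    then show False using LIMSEQ_unique tendsto_const by fastforce
  qed
  define w where "w = -2 * ln (r 1)"
  have vw: "v \<longlonglongrightarrow> w"
  proof -
    have "(\<lambda>n. -2 * ln (exp (-(1^2 * v n)/2))) \<longlonglongrightarrow> -2 * ln (r 1)"
      using r1pos cfX[of 1] unfolding r_def by (intro tendsto_intros) auto
    then show ?thesis unfolding w_def by simp
  qed
  have "cf M X u = complex_of_real (exp (-(u^2 * w)/2))" for u
  proof -
    have "(\<lambda>n. cf M (Xn n) u) \<longlonglongrightarrow> cf M X u" by (rule cf_conv[OF assms(1,2) lim])
    moreover have "(\<lambda>n. cf M (Xn n) u) \<longlonglongrightarrow> complex_of_real (exp (-(u^2 * w)/2))"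
      using g unfolding cf_gauss_def by (auto intro!: tendsto_intros vw)
    ultimately show ?thesis by (rule LIMSEQ_unique)
  qed
  moreover have "0 \<le> w" using vw by (rule LIMSEQ_le_const) (use v0 in auto)
  ultimately show ?thesis using vw unfolding cf_gauss_def by auto
qed

end


lemma quad_nonneg_disc:
  fixes a b c :: real
  assumes q: "\<And>t. 0 \<le> a * t^2 + 2 * b * t + c" and a: "0 \<le> a"
  shows "b^2 \<le> a * c"
proof (cases "a = 0")
  case True
  have "b = 0"
  proof (rule ccontr)
    assume "b \<noteq> 0"
    then show False using q[of "-(c+1)/(2*b)"] True by (simp add: field_simps)
  qed
  then show ?thesis using True by simp
next
  case False
  then have ap: "a > 0" using a by simp
  have "0 \<le> a * (-b/a)^2 + 2 * b * (-b/a) + c" by (rule q)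
  also have "\<dots> = c - b^2 / a" using ap by (simp add: power2_eq_square field_simps)
  finally show ?thesis using ap by (simp add: field_simps)
qed

definition Lin :: "('w \<Rightarrow> 'b \<Rightarrow> real) \<Rightarrow> ('w \<Rightarrow> real) \<Rightarrow> bool" where
  "Lin W X \<longleftrightarrow> (\<exists>F c. finite F \<and> (\<forall>\<omega>. X \<omega> = (\<Sum>x\<in>F. c x * W \<omega> x)))"

lemma Lin_W: "Lin W (\<lambda>\<omega>. W \<omega> x)"
  unfolding Lin_def by (rule exI[of _ "{x}"], rule exI[of _ "\<lambda>_. 1"]) simp

lemma Lin_zero: "Lin W (\<lambda>\<omega>. 0)"
  unfolding Lin_def by (rule exI[of _ "{}"]) simp

lemma Lin_scale: "Lin W X \<Longrightarrow> Lin W (\<lambda>\<omega>. a * X \<omega>)"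
  unfolding Lin_def
proof (elim exE conjE)
  fix F c assume "finite F" "\<forall>\<omega>. X \<omega> = (\<Sum>x\<in>F. c x * W \<omega> x)"
  then show "\<exists>F c. finite F \<and> (\<forall>\<omega>. a * X \<omega> = (\<Sum>x\<in>F. c x * W \<omega> x))"
    by (intro exI[of _ F] exI[of _ "\<lambda>x. a * c x"]) (simp add: sum_distrib_left mult.assoc)
qed

lemma Lin_add: "Lin W X \<Longrightarrow> Lin W Y \<Longrightarrow> Lin W (\<lambda>\<omega>. X \<omega> + Y \<omega>)"
  unfolding Lin_def
proof (elim exE conjE)
  fix F c G d assume F: "finite F" "\<forall>\<omega>. X \<omega> = (\<Sum>x\<in>F. c x * W \<omega> x)"
    and G: "finite G" "\<forall>\<omega>. Y \<omega> = (\<Sum>x\<in>G. d x * W \<omega> x)"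
  define e where "e x = (if x \<in> F then c x else 0) + (if x \<in> G then d x else 0)" for x
  have "X \<omega> + Y \<omega> = (\<Sum>x\<in>F \<union> G. e x * W \<omega> x)" for \<omega>
  proof -
    have pw: "e x * W \<omega> x = (if x \<in> F then c x * W \<omega> x else 0) + (if x \<in> G then d x * W \<omega> x else 0)" for x
      unfolding e_def by (simp add: distrib_right)
    have "(\<Sum>x\<in>F \<union> G. e x * W \<omega> x) = (\<Sum>x\<in>F \<union> G. (if x \<in> F then c x * W \<omega> x else 0)) +
       (\<Sum>x\<in>F \<union> G. (if x \<in> G then d x * W \<omega> x else 0))"
      unfolding pw by (rule sum.distrib)
    also have "\<dots> = (\<Sum>x\<in>F. c x * W \<omega> x) + (\<Sum>x\<in>G. d x * W \<omega> x)"
    proof -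
      have "(\<Sum>x\<in>F \<union> G. (if x \<in> F then c x * W \<omega> x else 0)) = (\<Sum>x\<in>F. c x * W \<omega> x)"
        using F(1) G(1) by (intro sum.mono_neutral_cong_right) auto
      moreover have "(\<Sum>x\<in>F \<union> G. (if x \<in> G then d x * W \<omega> x else 0)) = (\<Sum>x\<in>G. d x * W \<omega> x)"
        using F(1) G(1) by (intro sum.mono_neutral_cong_right) auto
      ultimately show ?thesis by simp
    qed
    finally show ?thesis using F G by simp
  qed
  then show "\<exists>F c. finite F \<and> (\<forall>\<omega>. X \<omega> + Y \<omega> = (\<Sum>x\<in>F. c x * W \<omega> x))"
    using F G by blast
qed

lemma Lin_diff: "Lin W X \<Longrightarrow> Lin W Y \<Longrightarrow> Lin W (\<lambda>\<omega>. X \<omega> - Y \<omega>)"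
proof -
  assume "Lin W X" "Lin W Y"
  then have "Lin W (\<lambda>\<omega>. X \<omega> + (-1) * Y \<omega>)" by (intro Lin_add Lin_scale)
  moreover have "(\<lambda>\<omega>. X \<omega> + (-1) * Y \<omega>) = (\<lambda>\<omega>. X \<omega> - Y \<omega>)" by auto
  ultimately show ?thesis by metis
qed

lemma Lin_sum: "finite S \<Longrightarrow> (\<And>i. i \<in> S \<Longrightarrow> Lin W (X i)) \<Longrightarrow> Lin W (\<lambda>\<omega>. \<Sum>i\<in>S. X i \<omega>)"
proof (induction S rule: finite_induct)
  case empty
  then show ?case using Lin_zero by simp
next
  case (insert i S)
  then have "Lin W (\<lambda>\<omega>. X i \<omega> + (\<Sum>i\<in>S. X i \<omega>))" by (intro Lin_add) auto
  then show ?case using insert by simp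
qed

lemma Lin_comb: "finite F \<Longrightarrow> Lin W (\<lambda>\<omega>. \<Sum>x\<in>F. c x * W \<omega> x)"
  by (intro Lin_sum Lin_scale Lin_W)

locale gfield = prob_space M for M :: "'w measure" +
  fixes W :: "'w \<Rightarrow> 'b \<Rightarrow> real"
  assumes G: "centered_gaussian_field M W"
begin

lemma Lin_crv: "Lin W X \<Longrightarrow> centered_gaussian_rv M X"
  unfolding Lin_def
proof (elim exE conjE)
  fix F c assume "finite F" and e: "\<forall>\<omega>. X \<omega> = (\<Sum>x\<in>F. c x * W \<omega> x)"
  have "centered_gaussian_rv M (\<lambda>\<omega>. \<Sum>x\<in>F. c x * W \<omega> x)"
    using G \<open>finite F\<close> unfolding centered_gaussian_field_def by blast
  moreover have "X = (\<lambda>\<omega>. \<Sum>x\<in>F. c x * W \<omega> x)" using e by (simp add: fun_eq_iff)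
  ultimately show ?thesis by simp
qed

lemma Lin_meas[measurable (raw)]: "Lin W X \<Longrightarrow> X \<in> borel_measurable M"
  using Lin_crv unfolding centered_gaussian_rv_def by blast

lemma W_meas[measurable]: "(\<lambda>\<omega>. W \<omega> x) \<in> borel_measurable M"
  by (rule Lin_meas[OF Lin_W])

lemma Lin_sq: "Lin W X \<Longrightarrow> integrable M (\<lambda>\<omega>. (X \<omega>)^2)"
  using gauss_rv_facts[OF prob_space_axioms Lin_crv] by blast

lemma Lin_cf: "Lin W X \<Longrightarrow> cf_gauss M X (\<integral>\<omega>. (X \<omega>)^2 \<partial>M)"
  unfolding cf_gauss_def using gauss_rv_facts[OF prob_space_axioms Lin_crv] Lin_meas by auto

lemma Lin_prod: "Lin W X \<Longrightarrow> Lin W Y \<Longrightarrow> integrable M (\<lambda>\<omega>. X \<omega> * Y \<omega>)"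
proof -
  assume X: "Lin W X" and Y: "Lin W Y"
  have [measurable]: "X \<in> borel_measurable M" "Y \<in> borel_measurable M" using X Y by (auto intro: Lin_meas)
  have "integrable M (\<lambda>\<omega>. (X \<omega>)^2 + (Y \<omega>)^2)" using Lin_sq[OF X] Lin_sq[OF Y] by simp
  then show ?thesis
  proof (rule Bochner_Integration.integrable_bound)
    show "AE \<omega> in M. norm (X \<omega> * Y \<omega>) \<le> norm ((X \<omega>)^2 + (Y \<omega>)^2)"
    proof (intro AE_I2)
      fix \<omega>
      have "2 * \<bar>X \<omega>\<bar> * \<bar>Y \<omega>\<bar> \<le> (X \<omega>)^2 + (Y \<omega>)^2"
        using sum_squares_bound[of "\<bar>X \<omega>\<bar>" "\<bar>Y \<omega>\<bar>"] by (simp add: power2_eq_square)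
      moreover have "0 \<le> \<bar>X \<omega>\<bar> * \<bar>Y \<omega>\<bar>" by simp
      ultimately have "\<bar>X \<omega>\<bar> * \<bar>Y \<omega>\<bar> \<le> (X \<omega>)^2 + (Y \<omega>)^2" by linarith
      then show "norm (X \<omega> * Y \<omega>) \<le> norm ((X \<omega>)^2 + (Y \<omega>)^2)"
        by (simp add: abs_mult)
    qed
  qed simp
qed


lemma Lin_expand:
  assumes X: "Lin W X" and Y: "Lin W Y"
  shows "(\<integral>\<omega>. (t * X \<omega> + Y \<omega>)^2 \<partial>M) =
    (\<integral>\<omega>. (X \<omega>)^2 \<partial>M) * t^2 + 2 * (\<integral>\<omega>. X \<omega> * Y \<omega> \<partial>M) * t + (\<integral>\<omega>. (Y \<omega>)^2 \<partial>M)"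
proof -
  have eq: "(\<lambda>\<omega>. (t * X \<omega> + Y \<omega>)^2) = (\<lambda>\<omega>. t^2 * (X \<omega>)^2 + (2 * t * (X \<omega> * Y \<omega>) + (Y \<omega>)^2))"
    by (simp add: power2_eq_square algebra_simps)
  have i1: "integrable M (\<lambda>\<omega>. t^2 * (X \<omega>)^2)" using Lin_sq[OF X] by simp
  have i2: "integrable M (\<lambda>\<omega>. 2 * t * (X \<omega> * Y \<omega>))" using Lin_prod[OF X Y] by simp
  have "(\<integral>\<omega>. (t * X \<omega> + Y \<omega>)^2 \<partial>M) = (\<integral>\<omega>. t^2 * (X \<omega>)^2 + (2 * t * (X \<omega> * Y \<omega>) + (Y \<omega>)^2) \<partial>M)"
    by (simp only: eq)
  also have "\<dots> = (\<integral>\<omega>. t^2 * (X \<omega>)^2 \<partial>M) + ((\<integral>\<omega>. 2 * t * (X \<omega> * Y \<omega>) \<partial>M) + (\<integral>\<omega>. (Y \<omega>)^2 \<partial>M))"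
    using i1 i2 Lin_sq[OF Y] by (simp add: Bochner_Integration.integral_add)
  also have "\<dots> = (\<integral>\<omega>. (X \<omega>)^2 \<partial>M) * t^2 + 2 * (\<integral>\<omega>. X \<omega> * Y \<omega> \<partial>M) * t + (\<integral>\<omega>. (Y \<omega>)^2 \<partial>M)"
    by (simp only: integral_mult_right_zero) (simp add: algebra_simps)
  finally show ?thesis .
qed

lemma Lin_CS:
  assumes X: "Lin W X" and Y: "Lin W Y"
  shows "(\<integral>\<omega>. X \<omega> * Y \<omega> \<partial>M)^2 \<le> (\<integral>\<omega>. (X \<omega>)^2 \<partial>M) * (\<integral>\<omega>. (Y \<omega>)^2 \<partial>M)"
proof (rule quad_nonneg_disc)
  fix t
  show "0 \<le> (\<integral>\<omega>. (X \<omega>)^2 \<partial>M) * t^2 + 2 * (\<integral>\<omega>. X \<omega> * Y \<omega> \<partial>M) * t + (\<integral>\<omega>. (Y \<omega>)^2 \<partial>M)"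
    unfolding Lin_expand[OF X Y, symmetric] by (rule integral_nonneg_AE) auto
qed (rule integral_nonneg_AE, auto)

lemma Lin_CS_abs:
  assumes X: "Lin W X" and Y: "Lin W Y"
  shows "\<bar>\<integral>\<omega>. X \<omega> * Y \<omega> \<partial>M\<bar> \<le> sqrt ((\<integral>\<omega>. (X \<omega>)^2 \<partial>M) * (\<integral>\<omega>. (Y \<omega>)^2 \<partial>M))"
  using Lin_CS[OF X Y] by (metis real_sqrt_abs real_sqrt_le_mono)

end


locale cfield = gfield M W for M :: "'w measure" and W :: "'w \<Rightarrow> 'b::metric_space \<Rightarrow> real" +
  assumes cont: "AE \<omega> in M. continuous_on UNIV (W \<omega>)"
begin

definition var :: "'b \<Rightarrow> real" where "var x = (\<integral>\<omega>. (W \<omega> x)^2 \<partial>M)"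
definition K :: "'b \<Rightarrow> 'b \<Rightarrow> real" where "K x y = (\<integral>\<omega>. W \<omega> x * W \<omega> y \<partial>M)"

lemma var_nonneg: "0 \<le> var x"
  unfolding var_def by (rule integral_nonneg_AE) auto

lemma W_lim:
  assumes "z \<longlonglongrightarrow> y"
  shows "AE \<omega> in M. (\<lambda>n. W \<omega> (z n)) \<longlonglongrightarrow> W \<omega> y"
  using cont
proof eventually_elim
  case (elim \<omega>)
  show ?case by (rule continuous_on_tendsto_compose[OF elim assms]) auto
qed

lemma var_lim:
  assumes "z \<longlonglongrightarrow> y"
  shows "(\<lambda>n. var (z n)) \<longlonglongrightarrow> var y"
proof -
  have "\<exists>w. (\<lambda>n. var (z n)) \<longlonglongrightarrow> w \<and> cf_gauss M (\<lambda>\<omega>. W \<omega> y) w"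
    by (rule cf_limit[OF _ _ W_lim[OF assms]]) (auto simp: var_def intro!: Lin_cf Lin_W)
  then obtain w where "(\<lambda>n. var (z n)) \<longlonglongrightarrow> w" "cf_gauss M (\<lambda>\<omega>. W \<omega> y) w" by blast
  moreover have "cf_gauss M (\<lambda>\<omega>. W \<omega> y) (var y)" unfolding var_def by (intro Lin_cf Lin_W)
  ultimately show ?thesis using cf_gauss_unique by blast
qed

lemma var_cont: "continuous_on S var"
  by (rule continuous_on_sequentiallyI) (rule var_lim)

lemma var_bounded: "compact S \<Longrightarrow> \<exists>B. \<forall>z\<in>S. var z \<le> B"
proof -
  assume "compact S"
  then have "bounded (var ` S)" by (intro compact_imp_bounded compact_continuous_image var_cont)
  then obtain B where "\<forall>x\<in>var ` S. \<bar>x\<bar> \<le> B" unfolding bounded_real by blast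
  then show ?thesis by (intro exI[of _ B]) auto
qed

lemma cf_gauss_zero: "cf_gauss M (\<lambda>\<omega>. 0) 0"
  unfolding cf_gauss_def cf_def by (simp add: prob_space)

lemma diff_lim:
  assumes "z \<longlonglongrightarrow> y"
  shows "(\<lambda>n. \<integral>\<omega>. (W \<omega> (z n) - W \<omega> y)^2 \<partial>M) \<longlonglongrightarrow> 0"
proof -
  have "\<exists>w. (\<lambda>n. \<integral>\<omega>. (W \<omega> (z n) - W \<omega> y)^2 \<partial>M) \<longlonglongrightarrow> w \<and> cf_gauss M (\<lambda>\<omega>. 0) w"
  proof (rule cf_limit)
    show "AE \<omega> in M. (\<lambda>n. W \<omega> (z n) - W \<omega> y) \<longlonglongrightarrow> 0"
      using W_lim[OF assms] by eventually_elim (simp add: LIM_zero)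
    show "cf_gauss M (\<lambda>\<omega>. W \<omega> (z n) - W \<omega> y) (\<integral>\<omega>. (W \<omega> (z n) - W \<omega> y)^2 \<partial>M)" for n
      by (intro Lin_cf Lin_diff Lin_W)
  qed auto
  then obtain w where "(\<lambda>n. \<integral>\<omega>. (W \<omega> (z n) - W \<omega> y)^2 \<partial>M) \<longlonglongrightarrow> w" "cf_gauss M (\<lambda>\<omega>. 0) w"
    by blast
  moreover have "w = 0" using cf_gauss_unique[OF \<open>cf_gauss M (\<lambda>\<omega>. 0) w\<close> cf_gauss_zero] .
  ultimately show ?thesis by simp
qed

lemma K_bound: "\<bar>K x y\<bar> \<le> sqrt (var x * var y)"
  unfolding K_def var_def by (intro Lin_CS_abs Lin_W)

lemma K_lim:
  assumes "z \<longlonglongrightarrow> y"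
  shows "(\<lambda>n. K x (z n)) \<longlonglongrightarrow> K x y"
proof -
  define d where "d n = (\<integral>\<omega>. (W \<omega> (z n) - W \<omega> y)^2 \<partial>M)" for n
  have "(\<lambda>n. K x (z n) - K x y) \<longlonglongrightarrow> 0"
  proof (rule Lim_null_comparison)
    show "\<forall>\<^sub>F n in sequentially. norm (K x (z n) - K x y) \<le> sqrt (var x * d n)"
    proof (intro always_eventually allI)
      fix n
      have "K x (z n) - K x y = (\<integral>\<omega>. W \<omega> x * (W \<omega> (z n) - W \<omega> y) \<partial>M)"
        unfolding K_def right_diff_distrib
        by (rule Bochner_Integration.integral_diff[symmetric]) (intro Lin_prod Lin_W)+
      also have "\<bar>\<dots>\<bar> \<le> sqrt (var x * d n)"
        unfolding var_def d_def by (intro Lin_CS_abs Lin_W Lin_diff)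
      finally show "norm (K x (z n) - K x y) \<le> sqrt (var x * d n)" by simp
    qed
    have "(\<lambda>n. sqrt (var x * d n)) \<longlonglongrightarrow> sqrt (var x * 0)"
      unfolding d_def by (intro tendsto_intros diff_lim assms)
    then show "(\<lambda>n. sqrt (var x * d n)) \<longlonglongrightarrow> 0" by simp
  qed
  then show ?thesis by (simp add: Lim_null[symmetric])
qed

end


lemma vec_lambda_measurable:
  fixes F :: "'d::finite \<Rightarrow> 'a \<Rightarrow> real"
  assumes [measurable]: "\<And>i. F i \<in> borel_measurable M"
  shows "(\<lambda>y. (\<chi> i. F i y) :: real^'d) \<in> borel_measurable M"
proof -
  have "(\<lambda>y. (\<chi> i. F i y) :: real^'d) = (\<lambda>y. \<Sum>i\<in>UNIV. F i y *\<^sub>R axis i 1)"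
  proof
    fix y
    show "(\<chi> i. F i y) = (\<Sum>i\<in>UNIV. F i y *\<^sub>R axis i 1)"
      using basis_expansion[of "(\<chi> i. F i y) :: real^'d"] by (simp add: scalar_mult_eq_scaleR)
  qed
  then show ?thesis by simp
qed

lemma vec_nth_measurable[measurable]: "(\<lambda>y::real^'d. y $ i) \<in> borel_measurable borel"
  by (rule borel_measurable_continuous_onI) (intro continuous_intros)

definition grid :: "nat \<Rightarrow> real^'d \<Rightarrow> real^'d" where
  "grid n y = (\<chi> i. real_of_int \<lfloor>real (Suc n) * y$i\<rfloor> / real (Suc n))"

lemma grid_meas[measurable]: "grid n \<in> borel_measurable borel"
  unfolding grid_def by (rule vec_lambda_measurable) measurable

lemma floor_approx: "\<bar>real_of_int \<lfloor>real (Suc n) * t\<rfloor> / real (Suc n) - t\<bar> \<le> 1 / real (Suc n)"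
proof -
  define N where "N = real (Suc n)"
  have N: "N > 0" unfolding N_def by simp
  have a: "real_of_int \<lfloor>N * t\<rfloor> \<le> N * t" "N * t < real_of_int \<lfloor>N * t\<rfloor> + 1" by linarith+
  have "\<bar>real_of_int \<lfloor>N * t\<rfloor> - N * t\<bar> \<le> 1" using a by linarith
  moreover have "real_of_int \<lfloor>N * t\<rfloor> / N - t = (real_of_int \<lfloor>N * t\<rfloor> - N * t) / N"
    using N by (simp add: diff_divide_distrib)
  ultimately have "\<bar>real_of_int \<lfloor>N * t\<rfloor> / N - t\<bar> \<le> 1 / N" using N
    by (simp add: abs_divide divide_right_mono)
  then show ?thesis unfolding N_def .
qed

lemma grid_dist: "norm (grid n y - (y :: real^'d)) \<le> real CARD('d) / real (Suc n)"
proof -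
  have "norm (grid n y - y) \<le> (\<Sum>i\<in>UNIV. \<bar>(grid n y - y) $ i\<bar>)" by (rule norm_le_l1_cart)
  also have "\<dots> \<le> (\<Sum>i\<in>(UNIV::'d set). 1 / real (Suc n))"
  proof (intro sum_mono)
    fix i
    have "(grid n y - y) $ i = real_of_int \<lfloor>real (Suc n) * y$i\<rfloor> / real (Suc n) - y$i"
      unfolding grid_def by simp
    then show "\<bar>(grid n y - y) $ i\<bar> \<le> 1 / real (Suc n)" using floor_approx[of n "y$i"] by (simp only:)
  qed
  also have "\<dots> = real CARD('d) / real (Suc n)" by simp
  finally show ?thesis .
qed

lemma grid_lim: "(\<lambda>n. grid n y) \<longlonglongrightarrow> (y :: real^'d)"
proof -
  have "(\<lambda>n. grid n y - y) \<longlonglongrightarrow> 0"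
  proof (rule Lim_null_comparison)
    show "\<forall>\<^sub>F n in sequentially. norm (grid n y - y) \<le> real CARD('d) * (1 / real (Suc n))"
      using grid_dist[of _ y] by (intro always_eventually allI) simp
    show "(\<lambda>n. real CARD('d) * (1 / real (Suc n))) \<longlonglongrightarrow> 0"
      using tendsto_mult_right_zero[OF LIMSEQ_Suc[OF lim_inverse_n']] by simp
  qed
  then show ?thesis by (simp add: Lim_null[symmetric])
qed

lemma grid_finite:
  assumes "bounded (D :: (real^'d) set)"
  shows "finite (grid n ` D)"
proof -
  obtain R where R: "\<And>y. y \<in> D \<Longrightarrow> norm y \<le> R" using assms unfolding bounded_iff by blast
  define m where "m = \<lceil>real (Suc n) * R\<rceil>"
  define S where "S = (\<lambda>k. (\<chi> i. real_of_int (k i) / real (Suc n)) :: real^'d) ` (\<Pi>\<^sub>E i\<in>(UNIV::'d set). {-m..m})"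
  have "finite S" unfolding S_def by (intro finite_imageI finite_PiE) auto
  moreover have "grid n ` D \<subseteq> S"
  proof
    fix g assume "g \<in> grid n ` D"
    then obtain y where y: "y \<in> D" "g = grid n y" by blast
    define k where "k i = \<lfloor>real (Suc n) * y$i\<rfloor>" for i
    have "\<bar>y $ i\<bar> \<le> R" for i using component_le_norm_cart[of y i] R[OF y(1)] by linarith
    then have "k i \<in> {-m..m}" for i
    proof -
      have b: "\<bar>real (Suc n) * y$i\<bar> \<le> real (Suc n) * R"
        using \<open>\<bar>y $ i\<bar> \<le> R\<close> by (simp add: abs_mult)
      have "real_of_int m \<ge> real (Suc n) * R" unfolding m_def by linarith
      then have "\<bar>real (Suc n) * y$i\<bar> \<le> real_of_int m" using b by linarith
      then show ?thesis unfolding k_def by (auto simp: floor_le_iff le_floor_iff abs_le_iff)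
    qed
    then have "k \<in> (\<Pi>\<^sub>E i\<in>(UNIV::'d set). {-m..m})" by auto
    moreover have "g = (\<chi> i. real_of_int (k i) / real (Suc n))" unfolding y(2) grid_def k_def by simp
    ultimately show "g \<in> S" unfolding S_def by blast
  qed
  ultimately show ?thesis by (rule finite_subset[rotated])
qed

lemma grid_sum_integral:
  fixes D :: "(real^'d) set" and f :: "real^'d \<Rightarrow> real"
  assumes D: "D \<in> sets lborel" "bounded D"
  shows "(LINT y:D|lborel. f (grid n y)) = (\<Sum>g\<in>grid n ` D. measure lborel (D \<inter> grid n -` {g}) * f g)"
proof -
  define \<Gamma> where "\<Gamma> = grid n ` D"
  have fin: "finite \<Gamma>" unfolding \<Gamma>_def by (rule grid_finite[OF D(2)])
  have sets: "D \<inter> grid n -` {g} \<in> sets lborel" for g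
  proof -
    have "grid n -` {g} \<inter> space borel \<in> sets borel" by (rule measurable_sets[OF grid_meas]) simp
    then show ?thesis using D(1) by simp
  qed
  have fm: "emeasure lborel (D \<inter> grid n -` {g}) < \<infinity>" for g
    using emeasure_bounded_finite[of "D \<inter> grid n -` {g}"] D(2) bounded_subset by blast
  have pw: "indicator D y * f (grid n y) = (\<Sum>g\<in>\<Gamma>. indicator (D \<inter> grid n -` {g}) y * f g)" for y
  proof (cases "y \<in> D")
    case True
    then have "(\<Sum>g\<in>\<Gamma>. indicator (D \<inter> grid n -` {g}) y * f g) = (\<Sum>g\<in>\<Gamma>. if g = grid n y then f g else 0)"
      by (intro sum.cong) (auto simp: indicator_def)
    also have "\<dots> = f (grid n y)" using fin True unfolding \<Gamma>_def by simp
    finally show ?thesis using True by simp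
  qed (simp add: indicator_def)
  have "(LINT y:D|lborel. f (grid n y)) = (\<integral>y. (\<Sum>g\<in>\<Gamma>. indicator (D \<inter> grid n -` {g}) y * f g) \<partial>lborel)"
    unfolding set_lebesgue_integral_def by (simp add: pw)
  also have "\<dots> = (\<Sum>g\<in>\<Gamma>. (\<integral>y. indicator (D \<inter> grid n -` {g}) y * f g \<partial>lborel))"
    by (rule Bochner_Integration.integral_sum) (auto intro!: integrable_real_indicator sets fm)
  also have "\<dots> = (\<Sum>g\<in>\<Gamma>. measure lborel (D \<inter> grid n -` {g}) * f g)"
    using sets fm by (intro sum.cong) (auto simp: measure_def)
  finally show ?thesis unfolding \<Gamma>_def .
qed


lemma cont_bound:
  fixes f :: "'a::metric_space \<Rightarrow> real"
  assumes "continuous_on UNIV f" "compact S"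
  shows "\<exists>B. \<forall>z\<in>S. \<bar>f z\<bar> \<le> B"
proof -
  have "bounded (f ` S)"
    by (intro compact_imp_bounded compact_continuous_image continuous_on_subset[OF assms(1)] assms(2)) auto
  then show ?thesis unfolding bounded_real by auto
qed

locale mfield = cfield M W for M :: "'w measure" and W :: "'w \<Rightarrow> real^'d \<Rightarrow> real" +
  fixes D :: "(real^'d) set"
  assumes Dm: "D \<in> sets lborel" and Db: "bounded D"
begin

definition Nc where "Nc = (SOME N. N \<in> null_sets M \<and> {\<omega>\<in>space M. \<not> continuous_on UNIV (W \<omega>)} \<subseteq> N)"

lemma Nc_ex: "\<exists>N. N \<in> null_sets M \<and> {\<omega>\<in>space M. \<not> continuous_on UNIV (W \<omega>)} \<subseteq> N"
proof -
  from cont obtain N where "{\<omega>\<in>space M. \<not> continuous_on UNIV (W \<omega>)} \<subseteq> N" "emeasure M N = 0" "N \<in> sets M"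
    by (rule AE_E)
  then show ?thesis by (intro exI[of _ N]) auto
qed

lemma Nc_null: "Nc \<in> null_sets M"
  and Nc_cont: "\<omega> \<in> space M \<Longrightarrow> \<omega> \<notin> Nc \<Longrightarrow> continuous_on UNIV (W \<omega>)"
  using someI_ex[OF Nc_ex] unfolding Nc_def[symmetric] by auto

lemma Nc_sets[measurable]: "Nc \<in> sets M" using Nc_null by auto

lemma AE_notNc: "AE \<omega> in M. \<omega> \<notin> Nc"
  using Nc_null by (rule AE_not_in)

definition Rb where "Rb = (SOME R. \<forall>y\<in>D. norm y \<le> R)"

lemma Rb: "y \<in> D \<Longrightarrow> norm y \<le> Rb"
proof -
  assume "y \<in> D"
  have "\<exists>R. \<forall>y\<in>D. norm y \<le> R" using Db unfolding bounded_iff by blast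
  then show ?thesis using someI_ex[of "\<lambda>R. \<forall>y\<in>D. norm y \<le> R"] \<open>y \<in> D\<close> unfolding Rb_def by blast
qed

definition C0 where "C0 = cball (0::real^'d) (Rb + real CARD('d))"

lemma C0_compact: "compact C0" unfolding C0_def by simp

lemma D_C0: "y \<in> D \<Longrightarrow> y \<in> C0"
  using Rb[of y] unfolding C0_def by (simp add: dist_norm)

lemma grid_C0: "y \<in> D \<Longrightarrow> grid n y \<in> C0"
proof -
  assume y: "y \<in> D"
  have "norm (grid n y) \<le> norm y + norm (grid n y - y)" by (rule norm_triangle_sub)
  also have "\<dots> \<le> Rb + real CARD('d)"
  proof -
    have "real CARD('d) / real (Suc n) \<le> real CARD('d)" by (simp add: divide_le_eq)
    then show ?thesis using Rb[OF y] grid_dist[of n y] by linarith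
  qed
  finally show ?thesis unfolding C0_def by (simp add: dist_norm)
qed

definition wt where "wt n g = measure lborel (D \<inter> grid n -` {g})"
definition Zn where "Zn n \<omega> = (\<Sum>g\<in>grid n ` D. wt n g * W \<omega> g)"
definition Z where "Z \<omega> = (if \<omega> \<in> Nc then 0 else (LINT y:D|lborel. W \<omega> y))"

lemma Zn_Lin: "Lin W (Zn n)"
  unfolding Zn_def[abs_def] by (intro Lin_comb grid_finite Db)

lemma Zn_meas[measurable]: "Zn n \<in> borel_measurable M"
  by (rule Lin_meas[OF Zn_Lin])

lemma Zn_eq: "Zn n \<omega> = (LINT y:D|lborel. W \<omega> (grid n y))"
  unfolding Zn_def wt_def by (rule grid_sum_integral[OF Dm Db, symmetric])

lemma Zn_conv:
  assumes \<omega>: "\<omega> \<in> space M" "\<omega> \<notin> Nc"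
  shows "(\<lambda>n. Zn n \<omega>) \<longlonglongrightarrow> Z \<omega>"
proof -
  have c: "continuous_on UNIV (W \<omega>)" by (rule Nc_cont[OF \<omega>])
  have [measurable]: "W \<omega> \<in> borel_measurable borel" by (rule borel_measurable_continuous_onI[OF c])
  obtain B where B: "\<And>z. z \<in> C0 \<Longrightarrow> \<bar>W \<omega> z\<bar> \<le> B" using cont_bound[OF c C0_compact] by blast
  have Dm'[measurable]: "D \<in> sets borel" using Dm by simp
  have fin: "emeasure lborel D < \<infinity>" by (rule emeasure_bounded_finite[OF Db])
  have "(\<lambda>n. \<integral>y. indicator D y * W \<omega> (grid n y) \<partial>lborel) \<longlonglongrightarrow> (\<integral>y. indicator D y * W \<omega> y \<partial>lborel)"
  proof (rule integral_dominated_convergence[where w="\<lambda>y. indicator D y * B"])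
    show "integrable lborel (\<lambda>y. indicator D y * B)"
      using fin Dm by (intro integrable_mult_left integrable_real_indicator) auto
    show "AE y in lborel. (\<lambda>n. indicator D y * W \<omega> (grid n y)) \<longlonglongrightarrow> indicator D y * W \<omega> y"
      by (intro AE_I2 tendsto_mult_left continuous_on_tendsto_compose[OF c grid_lim]) auto
    show "AE y in lborel. norm (indicator D y * W \<omega> (grid n y)) \<le> indicator D y * B" for n
      by (intro AE_I2) (auto simp: indicator_def intro: B grid_C0)
  qed auto
  then show ?thesis using \<omega> unfolding Zn_eq Z_def set_lebesgue_integral_def by simp
qed

lemma Zn_conv_AE: "AE \<omega> in M. (\<lambda>n. Zn n \<omega>) \<longlonglongrightarrow> Z \<omega>"
  using AE_notNc by (rule AE_mp) (auto intro!: AE_I2 Zn_conv)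

lemma Z_meas[measurable]: "Z \<in> borel_measurable M"
proof (rule borel_measurable_LIMSEQ_real)
  show "(\<lambda>n. if \<omega> \<in> Nc then 0 else Zn n \<omega>) \<longlonglongrightarrow> Z \<omega>" if "\<omega> \<in> space M" for \<omega>
    using Zn_conv[OF that] by (cases "\<omega> \<in> Nc") (auto simp: Z_def)
qed measurable

end


context mfield begin

lemma lin_sum_prod:
  assumes L: "Lin W L" and S: "finite S"
  shows "(\<integral>\<omega>. L \<omega> * (\<Sum>g\<in>S. c g * W \<omega> g) \<partial>M) = (\<Sum>g\<in>S. c g * (\<integral>\<omega>. L \<omega> * W \<omega> g \<partial>M))"
proof -
  have "(\<integral>\<omega>. L \<omega> * (\<Sum>g\<in>S. c g * W \<omega> g) \<partial>M) = (\<integral>\<omega>. (\<Sum>g\<in>S. c g * (L \<omega> * W \<omega> g)) \<partial>M)"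
    by (simp add: sum_distrib_left ac_simps)
  also have "\<dots> = (\<Sum>g\<in>S. (\<integral>\<omega>. c g * (L \<omega> * W \<omega> g) \<partial>M))"
    by (rule Bochner_Integration.integral_sum) (intro integrable_mult_right Lin_prod L Lin_W)
  also have "\<dots> = (\<Sum>g\<in>S. c g * (\<integral>\<omega>. L \<omega> * W \<omega> g \<partial>M))" by simp
  finally show ?thesis .
qed

lemma sum_lin_prod:
  assumes Y: "Lin W Y" and S: "finite S"
  shows "(\<integral>\<omega>. (\<Sum>x\<in>S. c x * W \<omega> x) * Y \<omega> \<partial>M) = (\<Sum>x\<in>S. c x * (\<integral>\<omega>. W \<omega> x * Y \<omega> \<partial>M))"
proof -
  have "(\<integral>\<omega>. (\<Sum>x\<in>S. c x * W \<omega> x) * Y \<omega> \<partial>M) = (\<integral>\<omega>. (\<Sum>x\<in>S. c x * (W \<omega> x * Y \<omega>)) \<partial>M)"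
    by (simp only: sum_distrib_right mult.assoc)
  also have "\<dots> = (\<Sum>x\<in>S. (\<integral>\<omega>. c x * (W \<omega> x * Y \<omega>) \<partial>M))"
    by (rule Bochner_Integration.integral_sum) (intro integrable_mult_right Lin_prod Y Lin_W)
  also have "\<dots> = (\<Sum>x\<in>S. c x * (\<integral>\<omega>. W \<omega> x * Y \<omega> \<partial>M))" by simp
  finally show ?thesis .
qed

lemma cov_Zn: "(\<integral>\<omega>. W \<omega> x * Zn n \<omega> \<partial>M) = (LINT y:D|lborel. K x (grid n y))"
proof -
  have "(\<integral>\<omega>. W \<omega> x * Zn n \<omega> \<partial>M) = (\<Sum>g\<in>grid n ` D. wt n g * K x g)"
    unfolding Zn_def K_def by (rule lin_sum_prod[OF Lin_W grid_finite[OF Db]])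
  also have "\<dots> = (LINT y:D|lborel. K x (grid n y))"
    unfolding wt_def by (rule grid_sum_integral[OF Dm Db, symmetric])
  finally show ?thesis .
qed

definition Bv where "Bv = (SOME B. \<forall>z\<in>C0. var z \<le> B)"

lemma Bv: "z \<in> C0 \<Longrightarrow> var z \<le> Bv"
  using someI_ex[OF var_bounded[OF C0_compact]] unfolding Bv_def[symmetric] by blast

lemma K_cont: "continuous_on UNIV (K x)"
  by (rule continuous_on_sequentiallyI) (rule K_lim)

definition hx where "hx x = (LINT y:D|lborel. K x y)"

lemma cov_lim: "(\<lambda>n. \<integral>\<omega>. W \<omega> x * Zn n \<omega> \<partial>M) \<longlonglongrightarrow> hx x"
proof -
  have [measurable]: "K x \<in> borel_measurable borel" by (rule borel_measurable_continuous_onI[OF K_cont])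
  have Dm'[measurable]: "D \<in> sets borel" using Dm by simp
  have fin: "emeasure lborel D < \<infinity>" by (rule emeasure_bounded_finite[OF Db])
  define B where "B = sqrt (var x * Bv)"
  have "(\<lambda>n. \<integral>y. indicator D y * K x (grid n y) \<partial>lborel) \<longlonglongrightarrow> (\<integral>y. indicator D y * K x y \<partial>lborel)"
  proof (rule integral_dominated_convergence[where w="\<lambda>y. indicator D y * B"])
    show "integrable lborel (\<lambda>y. indicator D y * B)"
      using fin Dm by (intro integrable_mult_left integrable_real_indicator) auto
    show "AE y in lborel. (\<lambda>n. indicator D y * K x (grid n y)) \<longlonglongrightarrow> indicator D y * K x y"
      by (intro AE_I2 tendsto_mult_left K_lim grid_lim)
    show "AE y in lborel. norm (indicator D y * K x (grid n y)) \<le> indicator D y * B" for n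
    proof (intro AE_I2)
      fix y
      show "norm (indicator D y * K x (grid n y)) \<le> indicator D y * B"
      proof (cases "y \<in> D")
        case True
        have "\<bar>K x (grid n y)\<bar> \<le> sqrt (var x * var (grid n y))" by (rule K_bound)
        also have "\<dots> \<le> B" unfolding B_def
          using Bv[OF grid_C0[OF True]] var_nonneg[of x] by (intro real_sqrt_le_mono mult_left_mono) auto
        finally show ?thesis using True by simp
      qed simp
    qed
  qed auto
  then show ?thesis unfolding cov_Zn hx_def set_lebesgue_integral_def by simp
qed

definition Vn where "Vn n = (\<integral>\<omega>. (Zn n \<omega>)^2 \<partial>M)"

lemma Vn_ex: "\<exists>w. Vn \<longlonglongrightarrow> w \<and> cf_gauss M Z w"
  unfolding Vn_def[abs_def]
  by (rule cf_limit[OF Zn_meas Z_meas Zn_conv_AE]) (intro Lin_cf Zn_Lin)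

definition s2 where "s2 = lim Vn"

lemma Vn_lim: "Vn \<longlonglongrightarrow> s2" and Z_gauss: "cf_gauss M Z s2"
proof -
  from Vn_ex obtain w where w: "Vn \<longlonglongrightarrow> w" "cf_gauss M Z w" by blast
  then have "s2 = w" unfolding s2_def by (simp add: limI)
  then show "Vn \<longlonglongrightarrow> s2" "cf_gauss M Z s2" using w by auto
qed

lemma s2_nonneg: "0 \<le> s2" using Z_gauss unfolding cf_gauss_def by simp

lemma hx_bound: "\<bar>hx x\<bar> \<le> sqrt (var x * s2)"
proof (rule tendsto_le[OF trivial_limit_sequentially])
  show "(\<lambda>n. \<bar>\<integral>\<omega>. W \<omega> x * Zn n \<omega> \<partial>M\<bar>) \<longlonglongrightarrow> \<bar>hx x\<bar>" by (intro tendsto_intros cov_lim)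
  show "(\<lambda>n. sqrt (var x * Vn n)) \<longlonglongrightarrow> sqrt (var x * s2)" by (intro tendsto_intros Vn_lim)
  show "\<forall>\<^sub>F n in sequentially. \<bar>\<integral>\<omega>. W \<omega> x * Zn n \<omega> \<partial>M\<bar> \<le> sqrt (var x * Vn n)"
    unfolding var_def Vn_def by (intro always_eventually allI Lin_CS_abs Lin_W Zn_Lin)
qed

lemma comb_Z:
  assumes F: "finite F"
  shows "cf_gauss M (\<lambda>\<omega>. (\<Sum>x\<in>F. c x * W \<omega> x) + \<beta> * Z \<omega>)
     ((\<integral>\<omega>. (\<Sum>x\<in>F. c x * W \<omega> x)^2 \<partial>M) + 2 * \<beta> * (\<Sum>x\<in>F. c x * hx x) + \<beta>^2 * s2)"
proof -
  define L where "L \<omega> = (\<Sum>x\<in>F. c x * W \<omega> x)" for \<omega>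
  have L: "Lin W L" unfolding L_def[abs_def] by (rule Lin_comb[OF F])
  have Lm[measurable]: "L \<in> borel_measurable M" by (rule Lin_meas[OF L])
  define v where "v n = (\<integral>\<omega>. (\<beta> * Zn n \<omega> + L \<omega>)^2 \<partial>M)" for n
  have "\<exists>w. v \<longlonglongrightarrow> w \<and> cf_gauss M (\<lambda>\<omega>. L \<omega> + \<beta> * Z \<omega>) w"
  proof (rule cf_limit)
    show "AE \<omega> in M. (\<lambda>n. \<beta> * Zn n \<omega> + L \<omega>) \<longlonglongrightarrow> L \<omega> + \<beta> * Z \<omega>"
      using Zn_conv_AE by eventually_elim (auto intro!: tendsto_eq_intros)
    show "cf_gauss M (\<lambda>\<omega>. \<beta> * Zn n \<omega> + L \<omega>) (v n)" for n
      unfolding v_def by (intro Lin_cf Lin_add Lin_scale Zn_Lin L)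
    show "(\<lambda>\<omega>. \<beta> * Zn n \<omega> + L \<omega>) \<in> borel_measurable M" for n by measurable
    show "(\<lambda>\<omega>. L \<omega> + \<beta> * Z \<omega>) \<in> borel_measurable M" by measurable
  qed
  then obtain w where w: "v \<longlonglongrightarrow> w" "cf_gauss M (\<lambda>\<omega>. L \<omega> + \<beta> * Z \<omega>) w" by blast
  have vexp: "v n = Vn n * \<beta>^2 + 2 * (\<integral>\<omega>. Zn n \<omega> * L \<omega> \<partial>M) * \<beta> + (\<integral>\<omega>. (L \<omega>)^2 \<partial>M)" for n
    unfolding v_def Vn_def by (rule Lin_expand[OF Zn_Lin L])
  have cov: "(\<integral>\<omega>. Zn n \<omega> * L \<omega> \<partial>M) = (\<Sum>x\<in>F. c x * (\<integral>\<omega>. W \<omega> x * Zn n \<omega> \<partial>M))" for n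
  proof -
    have "(\<integral>\<omega>. Zn n \<omega> * L \<omega> \<partial>M) = (\<integral>\<omega>. L \<omega> * Zn n \<omega> \<partial>M)" by (simp add: mult.commute)
    also have "\<dots> = (\<Sum>x\<in>F. c x * (\<integral>\<omega>. W \<omega> x * Zn n \<omega> \<partial>M))"
      unfolding L_def by (rule sum_lin_prod[OF Zn_Lin F])
    finally show ?thesis .
  qed
  have "v \<longlonglongrightarrow> s2 * \<beta>^2 + 2 * (\<Sum>x\<in>F. c x * hx x) * \<beta> + (\<integral>\<omega>. (L \<omega>)^2 \<partial>M)"
    unfolding vexp cov by (intro tendsto_intros Vn_lim cov_lim)
  then have "w = s2 * \<beta>^2 + 2 * (\<Sum>x\<in>F. c x * hx x) * \<beta> + (\<integral>\<omega>. (L \<omega>)^2 \<partial>M)"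
    using w(1) LIMSEQ_unique by blast
  then show ?thesis using w(2) unfolding L_def by (simp add: ac_simps)
qed

end


lemma char_normal:
  assumes sp: "\<sigma> > 0"
  shows "char (density lborel (normal_density 0 \<sigma>)) u = complex_of_real (exp (-(u^2 * \<sigma>^2)/2))"
proof -
  have "char (density lborel (normal_density 0 \<sigma>)) u = (\<integral>x. normal_density 0 \<sigma> x *\<^sub>R iexp (u * x) \<partial>lborel)"
    unfolding char_def by (simp add: integral_density)
  also have "\<dots> = \<bar>\<sigma>\<bar> *\<^sub>R (\<integral>y. normal_density 0 \<sigma> (0 + \<sigma> * y) *\<^sub>R iexp (u * (0 + \<sigma> * y)) \<partial>lborel)"
    using sp by (subst lborel_integral_real_affine[where c=\<sigma> and t=0]) auto
  also have "\<dots> = (\<integral>y. std_normal_density y *\<^sub>R iexp ((u * \<sigma>) * y) \<partial>lborel)"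
  proof -
    have nd: "\<And>y. normal_density 0 \<sigma> (\<sigma> * y) = std_normal_density y / \<sigma>"
      using sp unfolding normal_density_def
      by (simp add: power_mult_distrib real_sqrt_mult field_simps)
    have e: "\<And>y. normal_density 0 \<sigma> (0 + \<sigma> * y) *\<^sub>R iexp (u * (0 + \<sigma> * y))
        = (1/\<sigma>) *\<^sub>R (std_normal_density y *\<^sub>R iexp ((u * \<sigma>) * y))"
      using nd by (simp add: mult.assoc)
    show ?thesis using sp unfolding e integral_scaleR_right by simp
  qed
  also have "\<dots> = char std_normal_distribution (u * \<sigma>)"
    unfolding char_def by (subst integral_density) auto
  also have "\<dots> = complex_of_real (exp (-(u^2 * \<sigma>^2)/2))"
    by (simp add: char_std_normal_distribution power_mult_distrib)
  finally show ?thesis .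
qed

lemma normal_pos:
  assumes sp: "\<sigma> > 0"
  shows "measure (density lborel (normal_density 0 \<sigma>)) {t..} > 0"
proof -
  interpret N: prob_space "density lborel (normal_density 0 \<sigma>)" by (rule prob_space_normal_density) (rule sp)
  have e: "emeasure (density lborel (normal_density 0 \<sigma>)) {t..} = (\<integral>\<^sup>+ x. ennreal (normal_density 0 \<sigma> x) * indicator {t..} x \<partial>lborel)"
    by (rule emeasure_density) auto
  have "emeasure (density lborel (normal_density 0 \<sigma>)) {t..} \<noteq> 0"
  proof
    assume "emeasure (density lborel (normal_density 0 \<sigma>)) {t..} = 0"
    then have "AE x in lborel. ennreal (normal_density 0 \<sigma> x) * indicator {t..} x = 0"
      unfolding e by (subst (asm) nn_integral_0_iff_AE) auto
    then have "AE x in lborel. x \<notin> {t..t+1}"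
      proof eventually_elim
      case (elim x)
      show ?case
      proof
        assume "x \<in> {t..t+1}"
        then have "indicator {t..} x = (1::ennreal)" by (simp add: indicator_def)
        with elim have "ennreal (normal_density 0 \<sigma> x) = 0" by simp
        then show False using normal_density_pos[OF sp, of 0 x] by simp
      qed
    qed
    then have "emeasure lborel {t..t+1} = 0"
      by (subst (asm) AE_iff_measurable[where N="{t..t+1}"]) auto
    then show False by simp
  qed
  then show ?thesis by (simp add: N.emeasure_eq_measure zero_less_measure_iff)
qed

context prob_space begin

lemma gauss_tail_pos:
  assumes g: "cf_gauss M Z s" and s: "s > 0"
  shows "prob {\<omega>\<in>space M. t \<le> Z \<omega>} > 0"
proof -
  have Zm[measurable]: "Z \<in> borel_measurable M" using g unfolding cf_gauss_def by simp
  define \<sigma> where "\<sigma> = sqrt s"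
  have sp: "\<sigma> > 0" unfolding \<sigma>_def using s by simp
  have rN: "real_distribution (density lborel (normal_density 0 \<sigma>))"
    using prob_space_normal_density[OF sp] unfolding real_distribution_def real_distribution_axioms_def by auto
  have rZ: "real_distribution (distr M borel Z)" by simp
  have "char (distr M borel Z) = char (density lborel (normal_density 0 \<sigma>))"
  proof
    fix u
    have "char (distr M borel Z) u = cf M Z u"
      unfolding char_def cf_def by (subst integral_distr) auto
    also have "\<dots> = complex_of_real (exp (-(u^2 * s)/2))" using g unfolding cf_gauss_def by simp
    also have "\<dots> = char (density lborel (normal_density 0 \<sigma>)) u"
      using char_normal[OF sp, of u] s unfolding \<sigma>_def by simp
    finally show "char (distr M borel Z) u = char (density lborel (normal_density 0 \<sigma>)) u" .
  qed
  then have eq: "distr M borel Z = density lborel (normal_density 0 \<sigma>)"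
    by (rule Levy_uniqueness[OF rZ rN])
  have "prob {\<omega>\<in>space M. t \<le> Z \<omega>} = measure (distr M borel Z) {t..}"
    by (subst measure_distr) (auto intro!: arg_cong[where f=prob])
  also have "\<dots> > 0" unfolding eq by (rule normal_pos[OF sp])
  finally show ?thesis .
qed

end


lemma cf_gauss_at1: "cf_gauss M X v \<Longrightarrow> (CLINT \<omega>|M. iexp (X \<omega>)) = complex_of_real (exp (-v/2))"
proof -
  assume "cf_gauss M X v"
  then have "cf M X 1 = complex_of_real (exp (-(1^2 * v)/2))" unfolding cf_gauss_def by blast
  then show ?thesis unfolding cf_def by simp
qed

context mfield begin

lemma main:
  assumes eps: "\<epsilon> > 0" and hyp: "\<And>x. x \<in> D \<Longrightarrow> \<epsilon> \<le> hx x" and ne: "D \<noteq> {}"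
  shows "\<exists>A\<in>sets M. A \<subseteq> {\<omega>\<in>space M. \<forall>x\<in>D. a \<le> W \<omega> x} \<and> measure M A > 0"
proof -
  obtain x0 where x0: "x0 \<in> D" using ne by blast
  have s2pos: "s2 > 0"
  proof (rule ccontr)
    assume "\<not> s2 > 0"
    then have "s2 = 0" using s2_nonneg by simp
    then have "\<bar>hx x0\<bar> \<le> 0" using hx_bound[of x0] by simp
    then show False using hyp[OF x0] eps by simp
  qed
  define c where "c x = hx x / s2" for x
  define R where "R x \<omega> = W \<omega> x - c x * Z \<omega>" for x \<omega>
  have Rm[measurable]: "\<And>x. R x \<in> borel_measurable M" unfolding R_def[abs_def] by measurable
  have hc: "hx x = c x * s2" for x unfolding c_def using s2pos by simp
  have fac: "(CLINT \<omega>|M. iexp ((\<Sum>x\<in>F. s x * R x \<omega>) + v * Z \<omega>)) =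
      (CLINT \<omega>|M. iexp (\<Sum>x\<in>F. s x * R x \<omega>)) * (CLINT \<omega>|M. iexp (v * Z \<omega>))"
    if F: "finite F" for F s v
  proof -
    define L where "L \<omega> = (\<Sum>x\<in>F. s x * W \<omega> x)" for \<omega>
    define cL where "cL = (\<Sum>x\<in>F. s x * c x)"
    define VL where "VL = (\<integral>\<omega>. (\<Sum>x\<in>F. s x * W \<omega> x)^2 \<partial>M)"
    have hL: "(\<Sum>x\<in>F. s x * hx x) = cL * s2" unfolding cL_def hc sum_distrib_right by (simp add: ac_simps)
    have sR: "(\<Sum>x\<in>F. s x * R x \<omega>) = L \<omega> + (- cL) * Z \<omega>" for \<omega>
    proof -
      have "(\<Sum>x\<in>F. s x * R x \<omega>) = (\<Sum>x\<in>F. s x * W \<omega> x) - (\<Sum>x\<in>F. s x * c x) * Z \<omega>"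
        unfolding R_def by (simp add: right_diff_distrib sum_subtractf sum_distrib_right mult.assoc)
      then show ?thesis unfolding L_def cL_def by simp
    qed
    have g1: "cf_gauss M (\<lambda>\<omega>. L \<omega> + \<beta> * Z \<omega>) (VL + 2 * \<beta> * (cL * s2) + \<beta>^2 * s2)" for \<beta>
      using comb_Z[OF F, of s \<beta>] unfolding L_def[abs_def] VL_def hL .
    have e1: "(CLINT \<omega>|M. iexp ((\<Sum>x\<in>F. s x * R x \<omega>) + v * Z \<omega>)) =
        complex_of_real (exp (-(VL + 2 * (v - cL) * (cL * s2) + (v - cL)^2 * s2)/2))"
    proof -
      have pw: "\<And>\<omega>. (\<Sum>x\<in>F. s x * R x \<omega>) + v * Z \<omega> = L \<omega> + (v - cL) * Z \<omega>"
        unfolding sR by (simp add: algebra_simps)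
      show ?thesis unfolding pw by (rule cf_gauss_at1[OF g1[of "v - cL"]])
    qed
    have e2: "(CLINT \<omega>|M. iexp (\<Sum>x\<in>F. s x * R x \<omega>)) =
        complex_of_real (exp (-(VL + 2 * (- cL) * (cL * s2) + (- cL)^2 * s2)/2))"
      unfolding sR by (rule cf_gauss_at1[OF g1[of "- cL"]])
    have e3: "(CLINT \<omega>|M. iexp (v * Z \<omega>)) = complex_of_real (exp (-(v^2 * s2)/2))"
      using Z_gauss unfolding cf_gauss_def cf_def by simp
    have "exp (-(VL + 2 * (v - cL) * (cL * s2) + (v - cL)^2 * s2)/2) =
        exp (-(VL + 2 * (- cL) * (cL * s2) + (- cL)^2 * s2)/2) * exp (-(v^2 * s2)/2)"
    proof -
      have ex: "-(VL + 2 * (v - cL) * (cL * s2) + (v - cL)^2 * s2)/2 =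
          -(VL + 2 * (- cL) * (cL * s2) + (- cL)^2 * s2)/2 + -(v^2 * s2)/2"
        by (simp add: field_simps power2_eq_square)
      show ?thesis by (simp only: ex exp_add)
    qed
    then show ?thesis unfolding e1 e2 e3 by (simp del: of_real_mult add: of_real_mult[symmetric])
  qed
  obtain Q where Q: "countable Q" "Q \<subseteq> D" "D \<subseteq> closure Q" by (rule separable)
  have Qne: "Q \<noteq> {}" using Q ne by auto
  define q where "q = from_nat_into Q"
  have rq: "range q = Q" unfolding q_def using Qne Q(1) by simp
  have qD: "q i \<in> D" for i using rq Q(2) by auto
  define Bc where "Bc = sqrt (Bv * s2) / s2"
  have cb: "\<bar>c x\<bar> \<le> Bc" if "x \<in> D" for x
  proof -
    have "\<bar>hx x\<bar> \<le> sqrt (var x * s2)" by (rule hx_bound)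
    also have "\<dots> \<le> sqrt (Bv * s2)"
      using Bv[OF D_C0[OF that]] s2pos by (intro real_sqrt_le_mono mult_right_mono) auto
    finally show ?thesis unfolding c_def Bc_def using s2pos by (simp add: abs_divide divide_right_mono)
  qed
  define G where "G n = {\<omega>\<in>space M. \<forall>i. - real n \<le> R (q i) \<omega>}" for n :: nat
  have Gm[measurable]: "G n \<in> sets M" for n unfolding G_def by measurable
  have cover: "space M - Nc \<subseteq> (\<Union>n. G n)"
  proof
    fix \<omega> assume \<omega>: "\<omega> \<in> space M - Nc"
    have cw: "continuous_on UNIV (W \<omega>)" using Nc_cont \<omega> by auto
    obtain B where B: "\<And>z. z \<in> C0 \<Longrightarrow> \<bar>W \<omega> z\<bar> \<le> B" using cont_bound[OF cw C0_compact] by blast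
    obtain n :: nat where n: "B + Bc * \<bar>Z \<omega>\<bar> \<le> real n" using real_arch_simple by blast
    have "- real n \<le> R (q i) \<omega>" for i
    proof -
      have "\<bar>W \<omega> (q i)\<bar> \<le> B" by (rule B[OF D_C0[OF qD]])
      moreover have "\<bar>c (q i) * Z \<omega>\<bar> \<le> Bc * \<bar>Z \<omega>\<bar>"
        unfolding abs_mult by (intro mult_right_mono cb qD) auto
      ultimately show ?thesis unfolding R_def using n by (simp add: abs_le_iff)
    qed
    then show "\<omega> \<in> (\<Union>n. G n)" unfolding G_def using \<omega> by blast
  qed
  have "\<exists>n. prob (G n) > 0"
  proof (rule ccontr)
    assume "\<not> (\<exists>n. prob (G n) > 0)"
    then have "\<forall>n. prob (G n) = 0" using measure_nonneg[of M] by (metis not_less order.antisym)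
    then have "\<forall>n. G n \<in> null_sets M" by (auto simp: emeasure_eq_measure)
    then have "(\<Union>n. G n) \<union> Nc \<in> null_sets M" using Nc_null by auto
    moreover have "space M \<subseteq> (\<Union>n. G n) \<union> Nc" using cover by blast
    ultimately have "space M \<in> null_sets M" by (meson null_sets_subset sets.top)
    then have "emeasure M (space M) = 0" by blast
    then show False using emeasure_space_1 by simp
  qed
  then obtain n0 where n0: "prob (G n0) > 0" by blast
  define t where "t = max 0 ((a + real n0) * s2 / \<epsilon>)"
  have t0: "0 \<le> t" unfolding t_def by simp
  have p2: "prob {\<omega>\<in>space M. t \<le> Z \<omega>} > 0" by (rule gauss_tail_pos[OF Z_gauss s2pos])
  define p where "p = prob (G n0) * prob {\<omega>\<in>space M. t \<le> Z \<omega>}"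
  have ppos: "p > 0" unfolding p_def using n0 p2 by simp
  define A where "A m = {\<omega>\<in>space M. \<forall>i\<le>m. a \<le> W \<omega> (q i)}" for m
  have Am[measurable]: "A m \<in> sets M" for m unfolding A_def by measurable
  have Ap: "p \<le> prob (A m)" for m
  proof -
    define F where "F = q ` {..m}"
    have Ff: "finite F" unfolding F_def by simp
    have i1: "prob {\<omega>\<in>space M. (\<forall>x\<in>F. R x \<omega> \<in> {- real n0..}) \<and> Z \<omega> \<in> {t..}} =
        prob {\<omega>\<in>space M. \<forall>x\<in>F. R x \<omega> \<in> {- real n0..}} * prob {\<omega>\<in>space M. Z \<omega> \<in> {t..}}"
      by (rule indep_cf[OF Ff Rm Z_meas fac[OF Ff]]) auto
    have i2: "prob (G n0) \<le> prob {\<omega>\<in>space M. \<forall>x\<in>F. R x \<omega> \<in> {- real n0..}}"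
    proof (rule finite_measure_mono)
      show "G n0 \<subseteq> {\<omega>\<in>space M. \<forall>x\<in>F. R x \<omega> \<in> {- real n0..}}" unfolding G_def F_def by auto
      show "{\<omega>\<in>space M. \<forall>x\<in>F. R x \<omega> \<in> {- real n0..}} \<in> sets M"
        unfolding F_def by measurable
    qed
    have i3: "{\<omega>\<in>space M. Z \<omega> \<in> {t..}} = {\<omega>\<in>space M. t \<le> Z \<omega>}" by auto
    have i4: "prob {\<omega>\<in>space M. (\<forall>x\<in>F. R x \<omega> \<in> {- real n0..}) \<and> Z \<omega> \<in> {t..}} \<le> prob (A m)"
    proof (rule finite_measure_mono)
      show "{\<omega>\<in>space M. (\<forall>x\<in>F. R x \<omega> \<in> {- real n0..}) \<and> Z \<omega> \<in> {t..}} \<subseteq> A m"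
      proof (rule subsetI)
        fix \<omega> assume "\<omega> \<in> {\<omega>\<in>space M. (\<forall>x\<in>F. R x \<omega> \<in> {- real n0..}) \<and> Z \<omega> \<in> {t..}}"
        then have \<omega>: "\<omega> \<in> space M" "\<forall>x\<in>F. R x \<omega> \<in> {- real n0..}" "Z \<omega> \<in> {t..}" by auto
        have "a \<le> W \<omega> (q i)" if "i \<le> m" for i
        proof -
          have Ri: "- real n0 \<le> R (q i) \<omega>" using that \<omega>(2) unfolding F_def by auto
          have cq: "\<epsilon> / s2 \<le> c (q i)" unfolding c_def using hyp[OF qD] s2pos by (simp add: divide_right_mono)
          have Zt: "t \<le> Z \<omega>" using \<omega>(3) by simp
          have "(a + real n0) \<le> (\<epsilon> / s2) * t"
          proof -
            have "(a + real n0) * s2 / \<epsilon> \<le> t" unfolding t_def by simp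
            then show ?thesis using eps s2pos by (simp add: field_simps)
          qed
          also have "\<dots> \<le> c (q i) * Z \<omega>"
          proof -
            have "0 < \<epsilon> / s2" using eps s2pos by simp
            then have "0 \<le> c (q i)" using cq by linarith
            then show ?thesis using cq Zt t0 eps s2pos by (intro mult_mono) auto
          qed
          finally show "a \<le> W \<omega> (q i)" using Ri unfolding R_def by simp
        qed
        then show "\<omega> \<in> A m" unfolding A_def using \<omega>(1) by blast
      qed
    qed simp
    have "p \<le> prob {\<omega>\<in>space M. \<forall>x\<in>F. R x \<omega> \<in> {- real n0..}} * prob {\<omega>\<in>space M. t \<le> Z \<omega>}"
      unfolding p_def by (rule mult_right_mono[OF i2 measure_nonneg])
    also have "\<dots> = prob {\<omega>\<in>space M. (\<forall>x\<in>F. R x \<omega> \<in> {- real n0..}) \<and> Z \<omega> \<in> {t..}}"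
      using i1 i3 by simp
    also have "\<dots> \<le> prob (A m)" by (rule i4)
    finally show ?thesis .
  qed
  have dec: "decseq A" unfolding decseq_def A_def by auto
  have lim: "(\<lambda>m. prob (A m)) \<longlonglongrightarrow> prob (\<Inter>m. A m)"
    by (rule finite_Lim_measure_decseq) (use dec in auto)
  have pI: "p \<le> prob (\<Inter>m. A m)" using lim by (rule LIMSEQ_le_const) (use Ap in auto)
  define A0 where "A0 = (\<Inter>m. A m) - Nc"
  have A0m: "A0 \<in> sets M" unfolding A0_def by measurable
  have "measure M A0 = prob (\<Inter>m. A m)" unfolding A0_def
    by (rule measure_Diff_null_set[OF _ Nc_null]) measurable
  then have A0p: "measure M A0 > 0" using pI ppos by simp
  have "A0 \<subseteq> {\<omega>\<in>space M. \<forall>x\<in>D. a \<le> W \<omega> x}"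
  proof safe
    fix \<omega> assume \<omega>: "\<omega> \<in> A0"
    then have sp: "\<omega> \<in> space M" and nN: "\<omega> \<notin> Nc" unfolding A0_def A_def by auto
    show "\<omega> \<in> space M" by (rule sp)
    fix x assume x: "x \<in> D"
    have cw: "continuous_on UNIV (W \<omega>)" by (rule Nc_cont[OF sp nN])
    have "\<forall>i. a \<le> W \<omega> (q i)" using \<omega> unfolding A0_def A_def by auto
    then have "Q \<subseteq> {y. a \<le> W \<omega> y}" using rq by auto
    moreover have "closed {y. a \<le> W \<omega> y}" by (rule closed_Collect_le[OF continuous_on_const cw])
    ultimately have "closure Q \<subseteq> {y. a \<le> W \<omega> y}" by (rule closure_minimal)
    then show "a \<le> W \<omega> x" using Q(3) x by auto
  qed
  then show ?thesis using A0m A0p by blast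
qed

end


lemma Eball_open: "open (Eball r n :: (real^'d) set)"
  unfolding Eball_def by (simp add: open_ball[of 0 "r^n", unfolded ball_def dist_norm] open_Collect_less continuous_intros)

lemma Ecube_open: "open (Ecube r n :: (real^'d) set)"
proof -
  have "Ecube r n = (\<Inter>i\<in>UNIV. {x::real^'d. \<bar>x $ i\<bar> < r ^ n})" unfolding Ecube_def by auto
  moreover have "open {x::real^'d. \<bar>x $ i\<bar> < r ^ n}" for i
    by (intro open_Collect_less continuous_intros)
  ultimately show ?thesis by (auto intro!: open_INT)
qed

lemma Eball_bounded: "bounded (Eball r n :: (real^'d) set)"
  unfolding Eball_def bounded_iff by (intro exI[of _ "r^n"]) auto

lemma Ecube_bounded: "bounded (Ecube r n :: (real^'d) set)"
proof -
  have "norm x \<le> real CARD('d) * r^n" if "x \<in> Ecube r n" for x :: "real^'d"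
  proof -
    have "norm x \<le> (\<Sum>i\<in>UNIV. \<bar>x $ i\<bar>)" by (rule norm_le_l1_cart)
    also have "\<dots> \<le> (\<Sum>i\<in>(UNIV::'d set). r^n)"
      using that unfolding Ecube_def by (intro sum_mono) (simp add: less_imp_le)
    finally show ?thesis by simp
  qed
  then show ?thesis unfolding bounded_iff by blast
qed

theorem lemma3p1:
  fixes M :: "'w measure" and W :: "'w \<Rightarrow> real^'d \<Rightarrow> real"
    and r :: real and E :: "nat \<Rightarrow> (real^'d) set" and \<epsilon> a :: real
  assumes "prob_space M"
    and "CARD('d) \<ge> 2"
    and "r > 1"
    and "centered_gaussian_field M W"
    and "AE \<omega> in M. continuous_on UNIV (W \<omega>)"
    and "AE \<omega> in M. W \<omega> 0 = 0"
    and "E = Eball r \<or> E = Ecube r"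
    and "\<epsilon> > 0"
    and "\<forall>x \<in> E 1 - E 0.
           (LINT y:(E 1 - E 0)|lborel. integral\<^sup>L M (\<lambda>\<omega>. W \<omega> x * W \<omega> y)) \<ge> \<epsilon>"
  shows "\<exists>A \<in> sets M. A \<subseteq> {\<omega> \<in> space M. \<forall>x \<in> E 1 - E 0. W \<omega> x \<ge> a}
           \<and> measure M A > 0"
proof -
  interpret P: prob_space M by fact
  define D where "D = E 1 - E 0"
  have opn: "open (E n)" for n using assms(7) Eball_open Ecube_open by metis
  have bnd: "bounded (E n)" for n using assms(7) Eball_bounded Ecube_bounded by metis
  have Db: "bounded D" unfolding D_def using bnd[of 1] bounded_subset by blast
  have Dm: "D \<in> sets lborel" unfolding D_def using opn[of 1] opn[of 0] by (auto intro!: sets.Diff)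
  interpret mfield M W D
    by unfold_locales (use assms(4,5) Dm Db in auto)
  show ?thesis
  proof (cases "D = {}")
    case True
    then show ?thesis unfolding D_def[symmetric] using P.prob_space by (intro bexI[of _ "space M"]) auto
  next
    case False
    have hyp: "\<epsilon> \<le> hx x" if x: "x \<in> D" for x
    proof -
      have "hx x = (LINT y:D|lborel. integral\<^sup>L M (\<lambda>\<omega>. W \<omega> x * W \<omega> y))"
        unfolding hx_def K_def by simp
      then show ?thesis using assms(9) x unfolding D_def by auto
    qed
    from main[OF assms(8) hyp False, of a] show ?thesis unfolding D_def by blast
  qed
qed


end
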